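(* Let $\varphi$ be a computable forecasting system, $\mathcal D$ a countable set whose elements are encoded by natural numbers, and $C\subseteq\mathcal D\times\mathbb N_0\times\mathbb S$ a recursive set such that $|s|\le p$ for all $(d,p,s)\in C$. For $d\in\mathcal D$ and $p\in\mathbb N_0$ let $C_{d,p}=\{s\in\mathbb S:(d,p,s)\in C\}$. Then $(d,p,s)\mapsto\overline P_\varphi([C_{d,p}]\mid s)$ is a computable real map on $\mathcal D\times\mathbb N_0\times\mathbb S$.
   Context: $\mathbb N_0=\{0,1,\dots\}$; $\Omega=\{0,1\}^{\mathbb N}$; $\mathbb S$ finite binary strings, $|s|$ length, $\omega^n$ the first $n$ entries of $\omega$; $[s]=\{\omega:\omega^{|s|}=s\}$, $[A]=\bigcup_{s\in A}[s]$. $\mathcal I$: nonempty closed subintervals of $[0,1]$; $\overline E_I(f)=\max_{p\in I}[pf(1)+(1-p)f(0)]$. Forecasting system $\varphi:\mathbb S\to\mathcal I$, $\underline\varphi=\min\varphi$, $\overline\varphi=\max\varphi$. Supermartingale for $\varphi$: $M:\mathbb S\to\mathbb R$ with $\overline E_{\varphi(s)}(M(s\,\cdot))\le M(s)$ for all $s$. Conditional global upper probability: for $G\subseteq\Omega$ and $s\in\mathbb S$, $\overline P_\varphi(G\mid s)=\inf\{M(s):M\text{ supermartingale for }\varphi,\ \liminf_{n}M(\omega^n)\ge\mathbb 1_G(\omega)\text{ for all }\omega\in[s]\}$. Computability: standard notions of recursive maps/sets on encoded countable sets; a real map $r:\mathcal E\to\mathbb R$ is computable if there is a recursive $q:\mathcal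 E\times\mathbb N_0\to\mathbb Q$ with $|r(e)-q(e,N)|\le2^{-N}$ for all $e,N$; $\varphi$ is computable if $\underline\varphi,\overline\varphi$ are computable. *)

theory Defs
  imports Complex_Main "HOL-Library.Extended_Real" "HOL-Library.Liminf_Limsup" "HOL-Library.Nat_Bijection" "HOL-Library.Indicator_Function"
begin

text \<open>grec n f: f is a general recursive function of arity n (arguments given as a list
  of length n; values on lists of other lengths are irrelevant).  Minimisation is only
  allowed when it is total, so this is the class of total recursive functions.\<close>

inductive grec :: "nat \<Rightarrow> (nat list \<Rightarrow> nat) \<Rightarrow> bool" where
  g_zero: "grec n (\<lambda>_. 0)"
| g_succ: "grec 1 (\<lambda>xs. Suc (hd xs))"
| g_proj: "i < n \<Longrightarrow> grec n (\<lambda>xs. xs ! i)"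
| g_comp: "grec m f \<Longrightarrow> length gs = m \<Longrightarrow> (\<forall>g\<in>set gs. grec n g)
          \<Longrightarrow> grec n (\<lambda>xs. f (map (\<lambda>g. g xs) gs))"
| g_primrec: "grec n f \<Longrightarrow> grec (n + 2) g
          \<Longrightarrow> grec (Suc n) (\<lambda>xs. rec_nat (f (tl xs)) (\<lambda>k r. g (k # r # tl xs)) (hd xs))"
| g_mu: "grec (Suc n) f \<Longrightarrow> (\<forall>xs. length xs = n \<longrightarrow> (\<exists>y. f (y # xs) = 0))
          \<Longrightarrow> grec n (\<lambda>xs. LEAST y. f (y # xs) = 0)"

definition recursive_fun :: "(nat \<Rightarrow> nat) \<Rightarrow> bool" where
  "recursive_fun h \<longleftrightarrow> (\<exists>f. grec 1 f \<and> (\<forall>x. h x = f [x]))"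

definition enc_str :: "bool list \<Rightarrow> nat" where
  "enc_str s = list_encode (map of_bool s)"

definition rat_of_code :: "nat \<Rightarrow> rat" where
  "rat_of_code n = of_int (int_decode (fst (prod_decode n))) / of_nat (Suc (snd (prod_decode n)))"

definition enc_DNS :: "('d \<Rightarrow> nat) \<Rightarrow> ('d \<times> nat \<times> bool list) \<Rightarrow> nat" where
  "enc_DNS encD = (\<lambda>(d, p, s). prod_encode (encD d, prod_encode (p, enc_str s)))"

definition recursive_set :: "('e \<Rightarrow> nat) \<Rightarrow> 'e set \<Rightarrow> bool" where
  "recursive_set enc A \<longleftrightarrow> (\<exists>g. recursive_fun g \<and> (\<forall>e. e \<in> A \<longleftrightarrow> g (enc e) = 0))"

definition computable_real :: "('e \<Rightarrow> nat) \<Rightarrow> ('e \<Rightarrow> real) \<Rightarrow> bool" where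
  "computable_real enc r \<longleftrightarrow> (\<exists>q. recursive_fun q \<and>
     (\<forall>e N. \<bar>r e - real_of_rat (rat_of_code (q (prod_encode (enc e, N))))\<bar> \<le> (1/2) ^ N))"

definition prefix :: "nat \<Rightarrow> (nat \<Rightarrow> bool) \<Rightarrow> bool list" where
  "prefix n \<omega> = map \<omega> [0..<n]"

definition cyl :: "bool list \<Rightarrow> (nat \<Rightarrow> bool) set" where
  "cyl s = {\<omega>. prefix (length s) \<omega> = s}"

definition cyl_set :: "bool list set \<Rightarrow> (nat \<Rightarrow> bool) set" where
  "cyl_set A = (\<Union>s\<in>A. cyl s)"

definition forecasting_system :: "(bool list \<Rightarrow> real set) \<Rightarrow> bool" where
  "forecasting_system \<phi> \<longleftrightarrow> (\<forall>s. \<exists>a b. 0 \<le> a \<and> a \<le> b \<and> b \<le> 1 \<and> \<phi> s = {a..b})"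

definition computable_forecast :: "(bool list \<Rightarrow> real set) \<Rightarrow> bool" where
  "computable_forecast \<phi> \<longleftrightarrow> computable_real enc_str (\<lambda>s. Inf (\<phi> s))
                              \<and> computable_real enc_str (\<lambda>s. Sup (\<phi> s))"

definition upper_exp :: "real set \<Rightarrow> (bool \<Rightarrow> real) \<Rightarrow> real" where
  "upper_exp I f = (SUP p\<in>I. p * f True + (1 - p) * f False)"

definition supermartingale :: "(bool list \<Rightarrow> real set) \<Rightarrow> (bool list \<Rightarrow> real) \<Rightarrow> bool" where
  "supermartingale \<phi> M \<longleftrightarrow> (\<forall>s. upper_exp (\<phi> s) (\<lambda>x. M (s @ [x])) \<le> M s)"

definition upper_prob :: "(bool list \<Rightarrow> real set) \<Rightarrow> (nat \<Rightarrow> bool) set \<Rightarrow> bool list \<Rightarrow> ereal" where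
  "upper_prob \<phi> G s = Inf {ereal (M s) | M. supermartingale \<phi> M \<and>
      (\<forall>\<omega>\<in>cyl s. liminf (\<lambda>n. ereal (M (prefix n \<omega>))) \<ge> ereal (indicator G \<omega>))}"

end

theory Submission
  imports Defs
begin


definition cf :: "nat \<Rightarrow> (nat list \<Rightarrow> nat) \<Rightarrow> bool" where
  "cf n F \<longleftrightarrow> (\<exists>f. grec n f \<and> (\<forall>xs. length xs = n \<longrightarrow> f xs = F xs))"

lemma cf_cong: "cf n F \<Longrightarrow> (\<And>xs. length xs = n \<Longrightarrow> F xs = G xs) \<Longrightarrow> cf n G"
  unfolding cf_def by metis

lemma cf_zero: "cf n (\<lambda>_. 0)"
  unfolding cf_def using g_zero by blast

lemma cf_nth: "i < n \<Longrightarrow> cf n (\<lambda>xs. xs ! i)"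
  unfolding cf_def using g_proj by blast

lemma cf_succ: "cf 1 (\<lambda>xs. Suc (xs ! 0))"
  unfolding cf_def
  apply (rule exI[of _ "\<lambda>xs. Suc (hd xs)"])
  using g_succ apply simp
  apply (intro allI impI) subgoal for xs by (cases xs) auto done

lemma cf_comp:
  assumes "cf m F" "length gs = m" "\<forall>g\<in>set gs. cf n g"
  shows "cf n (\<lambda>xs. F (map (\<lambda>g. g xs) gs))"
proof -
  obtain f where f: "grec m f" "\<forall>xs. length xs = m \<longrightarrow> f xs = F xs" using assms(1) cf_def by blast
  define fs where "fs = map (\<lambda>g. SOME h. grec n h \<and> (\<forall>xs. length xs = n \<longrightarrow> h xs = g xs)) gs"
  have fs: "\<forall>i<length gs. grec n (fs ! i) \<and> (\<forall>xs. length xs = n \<longrightarrow> (fs ! i) xs = (gs ! i) xs)"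
  proof (intro allI impI)
    fix i assume i: "i < length gs"
    have "\<exists>h. grec n h \<and> (\<forall>xs. length xs = n \<longrightarrow> h xs = (gs!i) xs)"
      using assms(3) i nth_mem unfolding cf_def by blast
    from someI_ex[OF this] show "grec n (fs ! i) \<and> (\<forall>xs. length xs = n \<longrightarrow> (fs ! i) xs = (gs ! i) xs)"
      unfolding fs_def using i by simp
  qed
  have "grec n (\<lambda>xs. f (map (\<lambda>g. g xs) fs))"
    apply (rule g_comp[OF f(1)])
    using assms(2) fs by (auto simp: fs_def in_set_conv_nth)
  moreover have "\<forall>xs. length xs = n \<longrightarrow> f (map (\<lambda>g. g xs) fs) = F (map (\<lambda>g. g xs) gs)"
  proof (intro allI impI)
    fix xs :: "nat list" assume l: "length xs = n"
    have "map (\<lambda>g. g xs) fs = map (\<lambda>g. g xs) gs"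
      using fs l by (simp add: fs_def list_eq_iff_nth_eq)
    then show "f (map (\<lambda>g. g xs) fs) = F (map (\<lambda>g. g xs) gs)" using f(2) assms(2) by simp
  qed
  ultimately show ?thesis unfolding cf_def by blast
qed

lemma cf_prim:
  assumes "cf n I" "cf (Suc (Suc n)) S"
  shows "cf (Suc n) (\<lambda>ys. rec_nat (I (tl ys)) (\<lambda>k r. S (k # r # tl ys)) (hd ys))"
proof -
  obtain f where f: "grec n f" "\<forall>xs. length xs = n \<longrightarrow> f xs = I xs" using assms(1) cf_def by blast
  obtain g where g: "grec (n+2) g" "\<forall>xs. length xs = Suc (Suc n) \<longrightarrow> g xs = S xs"
    using assms(2) cf_def by (metis add_2_eq_Suc')
  have "grec (Suc n) (\<lambda>xs. rec_nat (f (tl xs)) (\<lambda>k r. g (k # r # tl xs)) (hd xs))"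
    by (rule g_primrec[OF f(1) g(1)])
  moreover have "\<forall>ys. length ys = Suc n \<longrightarrow> rec_nat (f (tl ys)) (\<lambda>k r. g (k # r # tl ys)) (hd ys)
       = rec_nat (I (tl ys)) (\<lambda>k r. S (k # r # tl ys)) (hd ys)"
    using f(2) g(2) by simp
  ultimately show ?thesis unfolding cf_def by blast
qed

lemma cf_comp1: "cf 1 (\<lambda>ys. F (ys!0)) \<Longrightarrow> cf n a \<Longrightarrow> cf n (\<lambda>xs. F (a xs))"
  using cf_comp[of 1 "\<lambda>ys. F (ys!0)" "[a]" n] by simp

lemma cf_comp2: "cf 2 (\<lambda>ys. F (ys!0) (ys!1)) \<Longrightarrow> cf n a \<Longrightarrow> cf n b \<Longrightarrow> cf n (\<lambda>xs. F (a xs) (b xs))"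
  using cf_comp[of 2 "\<lambda>ys. F (ys!0) (ys!1)" "[a,b]" n] by simp

lemma cf_comp3: "cf 3 (\<lambda>ys. F (ys!0) (ys!1) (ys!2)) \<Longrightarrow> cf n a \<Longrightarrow> cf n b \<Longrightarrow> cf n c \<Longrightarrow> cf n (\<lambda>xs. F (a xs) (b xs) (c xs))"
  using cf_comp[of 3 "\<lambda>ys. F (ys!0) (ys!1) (ys!2)" "[a,b,c]" n] by (simp add: numeral_3_eq_3)

lemma cf_Suc: "cf n a \<Longrightarrow> cf n (\<lambda>xs. Suc (a xs))"
  by (rule cf_comp1[OF cf_succ])

lemma cf_const: "cf n (\<lambda>xs. c)"
  by (induction c) (auto intro: cf_zero cf_Suc)

lemma cf_reindex:
  assumes "cf m F" "length js = m" "\<forall>j\<in>set js. j < n"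
  shows "cf n (\<lambda>xs. F (map (\<lambda>j. xs ! j) js))"
proof -
  have "cf n (\<lambda>xs. F (map (\<lambda>g. g xs) (map (\<lambda>j xs. xs ! j) js)))"
    apply (rule cf_comp[OF assms(1)]) using assms(2,3) by (auto intro: cf_nth)
  then show ?thesis by (simp add: comp_def)
qed

definition primr :: "nat \<Rightarrow> (nat \<Rightarrow> nat \<Rightarrow> nat) \<Rightarrow> nat \<Rightarrow> nat" where
  "primr I S k = rec_nat I S k"

lemma primr_0[simp]: "primr I S 0 = I" and primr_Suc[simp]: "primr I S (Suc k) = S k (primr I S k)"
  by (simp_all add: primr_def)

lemma cf_rec:
  assumes K: "cf n K" and I: "cf n I"
    and S: "cf (Suc (Suc n)) (\<lambda>ys. S (ys!0) (ys!1) (map (\<lambda>j. ys ! Suc (Suc j)) [0..<n]))"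
  shows "cf n (\<lambda>xs. primr (I xs) (\<lambda>k r. S k r xs) (K xs))"
proof -
  let ?S' = "\<lambda>ys. S (ys!0) (ys!1) (map (\<lambda>j. ys ! Suc (Suc j)) [0..<n])"
  have P: "cf (Suc n) (\<lambda>ys. rec_nat (I (tl ys)) (\<lambda>k r. ?S' (k # r # tl ys)) (hd ys))"
    by (rule cf_prim[OF I S])
  have "cf n (\<lambda>xs. (\<lambda>ys. rec_nat (I (tl ys)) (\<lambda>k r. ?S' (k # r # tl ys)) (hd ys))
          (map (\<lambda>g. g xs) (K # map (\<lambda>j xs. xs ! j) [0..<n])))"
    apply (rule cf_comp[OF P]) using K by (auto intro: cf_nth)
  then show ?thesis
  proof (rule cf_cong)
    fix xs :: "nat list" assume l: "length xs = n"
    have m: "map (\<lambda>g. g xs) (K # map (\<lambda>j xs. xs ! j) [0..<n]) = K xs # xs"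
      using l map_nth[of xs] by (simp add: comp_def)
    have "map (\<lambda>j. xs ! j) [0..<n] = xs" using l map_nth[of xs] by simp
    then show "(\<lambda>ys. rec_nat (I (tl ys)) (\<lambda>k r. ?S' (k # r # tl ys)) (hd ys))
          (map (\<lambda>g. g xs) (K # map (\<lambda>j xs. xs ! j) [0..<n])) = primr (I xs) (\<lambda>k r. S k r xs) (K xs)"
      unfolding m by (simp add: primr_def)
  qed
qed

definition bsum :: "nat \<Rightarrow> (nat \<Rightarrow> nat) \<Rightarrow> nat" where
  "bsum k f = (\<Sum>i<k. f i)"

lemma bsum_primr: "bsum k f = primr 0 (\<lambda>i r. r + f i) k"
  by (induction k) (simp_all add: bsum_def)

lemma cf_add2: "cf 2 (\<lambda>ys. ys!0 + ys!1)"
proof -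
  have "cf 2 (\<lambda>xs. primr (xs!0) (\<lambda>k r. Suc r) (xs!1))"
    by (rule cf_rec[where S="\<lambda>k r xs. Suc r"]) (auto intro!: cf_nth cf_Suc)
  then show ?thesis
  proof (rule cf_cong)
    have "\<And>a b. primr a (\<lambda>k r. Suc r) b = a + b" by (induct_tac b) simp_all
    then show "\<And>xs. primr (xs!0) (\<lambda>k r. Suc r) (xs!1) = xs!0 + xs!1" by simp
  qed
qed


lemma cf_add: "cf n a \<Longrightarrow> cf n b \<Longrightarrow> cf n (\<lambda>xs. a xs + b xs)"
  by (rule cf_comp2[OF cf_add2])

lemma cf_mult2: "cf 2 (\<lambda>ys. ys!0 * ys!1)"
proof -
  have "cf 2 (\<lambda>xs. primr 0 (\<lambda>k r. r + xs!0) (xs!1))"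
    by (rule cf_rec[where S="\<lambda>k r xs. r + xs!0"]) (auto intro!: cf_nth cf_add cf_const)
  then show ?thesis
  proof (rule cf_cong)
    have "\<And>a b. primr 0 (\<lambda>k r. r + a) b = a * b" by (induct_tac b) simp_all
    then show "\<And>xs. primr 0 (\<lambda>k r. r + xs!0) (xs!1) = xs!0 * xs!1" by simp
  qed
qed

lemma cf_mult: "cf n a \<Longrightarrow> cf n b \<Longrightarrow> cf n (\<lambda>xs. a xs * b xs)"
  by (rule cf_comp2[OF cf_mult2])

lemma cf_pred1: "cf 1 (\<lambda>ys. ys!0 - 1)"
proof -
  have "cf 1 (\<lambda>xs. primr 0 (\<lambda>k r. k) (xs!0))"
    by (rule cf_rec[where S="\<lambda>k r xs. k"]) (auto intro!: cf_nth cf_const)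
  then show ?thesis
  proof (rule cf_cong)
    have "\<And>b. primr 0 (\<lambda>k r. k) b = b - 1" by (induct_tac b) simp_all
    then show "\<And>xs. primr 0 (\<lambda>k r. k) (xs!0) = xs!0 - 1" by simp
  qed
qed

lemma cf_pred: "cf n a \<Longrightarrow> cf n (\<lambda>xs. a xs - 1)"
  by (rule cf_comp1[OF cf_pred1])

lemma cf_minus2: "cf 2 (\<lambda>ys. ys!0 - ys!1)"
proof -
  have "cf 2 (\<lambda>xs. primr (xs!0) (\<lambda>k r. r - 1) (xs!1))"
    apply (rule cf_rec[where S="\<lambda>k r xs. r - 1"])
    apply (rule cf_nth, simp) apply (rule cf_nth, simp)
    apply (rule cf_pred) apply (rule cf_nth, simp) done
  then show ?thesis
  proof (rule cf_cong)
    have "\<And>a b. primr a (\<lambda>k r. r - 1) b = a - b" by (induct_tac b) simp_all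
    then show "\<And>xs. primr (xs!0) (\<lambda>k r. r - 1) (xs!1) = xs!0 - xs!1" by simp
  qed
qed

lemma cf_minus: "cf n a \<Longrightarrow> cf n b \<Longrightarrow> cf n (\<lambda>xs. a xs - b xs)"
  by (rule cf_comp2[OF cf_minus2])

lemma if_arith: "(if z = (0::nat) then c else d) = c * (1 - z) + d * (1 - (1 - z))"
  by (cases z) auto

lemma cf_ifeq: "cf n a \<Longrightarrow> cf n b \<Longrightarrow> cf n c \<Longrightarrow> cf n d \<Longrightarrow> cf n (\<lambda>xs. if a xs = b xs then c xs else d xs)"
proof -
  assume h: "cf n a" "cf n b" "cf n c" "cf n d"
  have "cf n (\<lambda>xs. c xs * (1 - ((a xs - b xs) + (b xs - a xs))) + d xs * (1 - (1 - ((a xs - b xs) + (b xs - a xs)))))"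
    using h by (intro cf_add cf_mult cf_minus cf_const)
  then show ?thesis
    by (rule cf_cong) (metis if_arith[of "(a _ - b _) + (b _ - a _)"] add_is_0 diff_is_0_eq le_antisym order_refl)
qed

lemma cf_ifle: "cf n a \<Longrightarrow> cf n b \<Longrightarrow> cf n c \<Longrightarrow> cf n d \<Longrightarrow> cf n (\<lambda>xs. if a xs \<le> b xs then c xs else d xs)"
proof -
  assume h: "cf n a" "cf n b" "cf n c" "cf n d"
  have "cf n (\<lambda>xs. c xs * (1 - (a xs - b xs)) + d xs * (1 - (1 - (a xs - b xs))))"
    using h by (intro cf_add cf_mult cf_minus cf_const)
  then show ?thesis
    by (rule cf_cong) (metis if_arith[of "a _ - b _"] diff_is_0_eq)
qed

lemma map_nth_len: "length L = n \<Longrightarrow> map ((!) L) [0..<n] = L"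
  using map_nth[of L] by simp

lemma cf_sum:
  assumes K: "cf n K" and B: "cf (Suc n) (\<lambda>ys. B (ys!0) (map (\<lambda>j. ys ! Suc j) [0..<n]))"
  shows "cf n (\<lambda>xs. bsum (K xs) (\<lambda>i. B i xs))"
proof -
  have B': "cf (Suc (Suc n)) (\<lambda>zs. (\<lambda>ys. B (ys!0) (map (\<lambda>j. ys ! Suc j) [0..<n])) (map (\<lambda>j. zs ! j) (0 # map (\<lambda>j. Suc (Suc j)) [0..<n])))"
    by (rule cf_reindex[OF B]) auto
  have B'': "cf (Suc (Suc n)) (\<lambda>ys. ys!1 + B (ys!0) (map (\<lambda>j. ys ! Suc (Suc j)) [0..<n]))"
    apply (rule cf_add[OF cf_nth])
     apply simp
    apply (rule cf_cong[OF B'])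
    by (simp add: comp_def map_nth_len)
  have "cf n (\<lambda>xs. primr 0 (\<lambda>k r. r + B k xs) (K xs))"
    by (rule cf_rec[OF K cf_const, where S="\<lambda>k r xs. r + B k xs"]) (use B'' in simp)
  then show ?thesis by (simp add: bsum_primr)
qed

lemma cf_pow: "cf n a \<Longrightarrow> cf n b \<Longrightarrow> cf n (\<lambda>xs. a xs ^ b xs)"
proof -
  assume h: "cf n a" "cf n b"
  have "cf n (\<lambda>xs. primr 1 (\<lambda>k r. r * a xs) (b xs))"
    apply (rule cf_rec[OF h(2) cf_const, where S="\<lambda>k r xs. r * a xs"])
    apply (rule cf_mult[OF cf_nth]) apply simp
    apply (rule cf_cong[OF cf_reindex[OF h(1), where js="map (\<lambda>j. Suc (Suc j)) [0..<n]" and n="Suc (Suc n)"]])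
    by (auto simp: comp_def)
  then show ?thesis
  proof (rule cf_cong)
    have "\<And>b. primr 1 (\<lambda>k r. r * a') b = a' ^ b" for a' by (induct_tac b) simp_all
    then show "\<And>xs. primr 1 (\<lambda>k r. r * a xs) (b xs) = a xs ^ b xs" by simp
  qed
qed


lemmas cfI = cf_const cf_nth cf_Suc cf_add cf_mult cf_minus cf_pow cf_ifeq cf_ifle cf_sum cf_rec

lemma cf_min: "cf n a \<Longrightarrow> cf n b \<Longrightarrow> cf n (\<lambda>xs. min (a xs) (b xs))"
proof -
  assume h: "cf n a" "cf n b"
  have "cf n (\<lambda>xs. if a xs \<le> b xs then a xs else b xs)" by (rule cf_ifle[OF h h])
  then show ?thesis by (rule cf_cong) (simp add: min_def)
qed

lemma div_bsum: "x div y = (if y = 0 then 0 else bsum x (\<lambda>k. if Suc k * y \<le> x then 1 else 0))"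
proof (cases "y = 0")
  case False
  have "{k\<in>{..<x}. Suc k * y \<le> x} = {..<x div y}"
  proof (intro set_eqI iffI)
    fix k assume "k \<in> {k\<in>{..<x}. Suc k * y \<le> x}"
    then have "Suc k \<le> x div y" using False less_eq_div_iff_mult_less_eq[of y "Suc k" x] by simp
    then show "k \<in> {..<x div y}" by simp
  next
    fix k assume "k \<in> {..<x div y}"
    then have "Suc k \<le> x div y" by simp
    moreover have "k < x" using calculation div_le_dividend[of x y] by linarith
    ultimately show "k \<in> {k\<in>{..<x}. Suc k * y \<le> x}"
      using False less_eq_div_iff_mult_less_eq[of y "Suc k" x] by (simp del: mult_Suc)
  qed
  moreover have "bsum x (\<lambda>k. if Suc k * y \<le> x then 1 else 0) = card {k\<in>{..<x}. Suc k * y \<le> x}"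
    unfolding bsum_def by (simp add: sum.If_cases Int_def)
  ultimately show ?thesis using False by simp
qed simp

lemma cf_div: "cf n a \<Longrightarrow> cf n b \<Longrightarrow> cf n (\<lambda>xs. a xs div b xs)"
proof -
  assume h: "cf n a" "cf n b"
  have "cf 2 (\<lambda>xs. if xs!1 = 0 then 0 else bsum (xs!0) (\<lambda>k. if Suc k * xs!1 \<le> xs!0 then 1 else 0))"
    by (rule cfI | simp)+
  then have "cf 2 (\<lambda>xs. xs!0 div xs!1)" by (rule cf_cong) (subst div_bsum, rule refl)
  then show ?thesis by (rule cf_comp2[OF _ h])
qed

lemma cf_mod: "cf n a \<Longrightarrow> cf n b \<Longrightarrow> cf n (\<lambda>xs. a xs mod b xs)"
proof -
  assume h: "cf n a" "cf n b"
  have "cf n (\<lambda>xs. a xs - b xs * (a xs div b xs))" by (intro cf_minus cf_mult cf_div h)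
  then show ?thesis by (rule cf_cong) (simp add: mod_div_mult_eq[symmetric] minus_mult_div_eq_mod)
qed

lemmas cfI2 = cfI cf_div cf_mod cf_min

definition pe :: "nat \<Rightarrow> nat \<Rightarrow> nat" where "pe a b = prod_encode (a, b)"
definition pfst :: "nat \<Rightarrow> nat" where "pfst x = fst (prod_decode x)"
definition psnd :: "nat \<Rightarrow> nat" where "psnd x = snd (prod_decode x)"

lemma cf_pe: "cf n a \<Longrightarrow> cf n b \<Longrightarrow> cf n (\<lambda>xs. pe (a xs) (b xs))"
proof -
  assume h: "cf n a" "cf n b"
  have "cf n (\<lambda>xs. (a xs + b xs) * Suc (a xs + b xs) div 2 + a xs)" by (rule cfI2 h)+
  then show ?thesis by (rule cf_cong) (simp add: pe_def prod_encode_def triangle_def)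
qed

lemma pe_eq_iff: "pe a b = x \<longleftrightarrow> (a, b) = prod_decode x"
  unfolding pe_def by (metis prod_decode_inverse prod_encode_inverse)

lemma pfst_bsum: "pfst x = bsum (Suc x) (\<lambda>a. bsum (Suc x) (\<lambda>b. if pe a b = x then a else 0))"
proof -
  obtain a0 b0 where d: "prod_decode x = (a0, b0)" by fastforce
  have x: "x = prod_encode (a0, b0)" using d by (metis prod_decode_inverse)
  have "b0 < Suc x" "a0 < Suc x" using x le_prod_encode_1 le_prod_encode_2 by (simp_all add: le_imp_less_Suc)
  then have "\<And>a. bsum (Suc x) (\<lambda>b. if pe a b = x then a else 0) = (if a = a0 then a else 0)"
    unfolding bsum_def pe_eq_iff d by (simp add: sum.delta')
  then show ?thesis using \<open>a0 < Suc x\<close> unfolding bsum_def pfst_def d by (simp add: sum.delta')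
qed

lemma psnd_bsum: "psnd x = bsum (Suc x) (\<lambda>a. bsum (Suc x) (\<lambda>b. if pe a b = x then b else 0))"
proof -
  obtain a0 b0 where d: "prod_decode x = (a0, b0)" by fastforce
  have x: "x = prod_encode (a0, b0)" using d by (metis prod_decode_inverse)
  have "b0 < Suc x" "a0 < Suc x" using x le_prod_encode_1 le_prod_encode_2 by (simp_all add: le_imp_less_Suc)
  then have "\<And>a. bsum (Suc x) (\<lambda>b. if pe a b = x then b else 0) = (if a = a0 then b0 else 0)"
    unfolding bsum_def pe_eq_iff d by (simp add: sum.delta' if_distrib cong: if_cong)
  then show ?thesis using \<open>a0 < Suc x\<close> unfolding bsum_def psnd_def d by (simp add: sum.delta')
qed

lemma cf_pfst: "cf n a \<Longrightarrow> cf n (\<lambda>xs. pfst (a xs))"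
proof -
  assume h: "cf n a"
  have "cf 1 (\<lambda>xs. bsum (Suc (xs!0)) (\<lambda>a. bsum (Suc (xs!0)) (\<lambda>b. if pe a b = xs!0 then a else 0)))"
    by (rule cfI2 cf_pe | simp)+
  then have "cf 1 (\<lambda>xs. pfst (xs!0))" by (rule cf_cong) (simp add: pfst_bsum)
  then show ?thesis by (rule cf_comp1[OF _ h])
qed

lemma cf_psnd: "cf n a \<Longrightarrow> cf n (\<lambda>xs. psnd (a xs))"
proof -
  assume h: "cf n a"
  have "cf 1 (\<lambda>xs. bsum (Suc (xs!0)) (\<lambda>a. bsum (Suc (xs!0)) (\<lambda>b. if pe a b = xs!0 then b else 0)))"
    by (rule cfI2 cf_pe | simp)+
  then have "cf 1 (\<lambda>xs. psnd (xs!0))" by (rule cf_cong) (simp add: psnd_bsum)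
  then show ?thesis by (rule cf_comp1[OF _ h])
qed

lemmas cfI3 = cfI2 cf_pe cf_pfst cf_psnd


lemma cf_comp4: "cf 4 (\<lambda>ys. F (ys!0) (ys!1) (ys!2) (ys!3)) \<Longrightarrow> cf n a \<Longrightarrow> cf n b \<Longrightarrow> cf n c \<Longrightarrow> cf n d
   \<Longrightarrow> cf n (\<lambda>xs. F (a xs) (b xs) (c xs) (d xs))"
  using cf_comp[of 4 "\<lambda>ys. F (ys!0) (ys!1) (ys!2) (ys!3)" "[a,b,c,d]" n] by (simp add: numeral_eq_Suc)

lemma cf_comp5: "cf 5 (\<lambda>ys. F (ys!0) (ys!1) (ys!2) (ys!3) (ys!4)) \<Longrightarrow> cf n a \<Longrightarrow> cf n b \<Longrightarrow> cf n c \<Longrightarrow> cf n d \<Longrightarrow> cf n e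
   \<Longrightarrow> cf n (\<lambda>xs. F (a xs) (b xs) (c xs) (d xs) (e xs))"
  using cf_comp[of 5 "\<lambda>ys. F (ys!0) (ys!1) (ys!2) (ys!3) (ys!4)" "[a,b,c,d,e]" n] by (simp add: numeral_eq_Suc)

lemma cf_oracle: "recursive_fun h \<Longrightarrow> cf n a \<Longrightarrow> cf n (\<lambda>xs. h (a xs))"
proof -
  assume "recursive_fun h" "cf n a"
  then obtain f where f: "grec 1 f" "\<forall>x. h x = f [x]" unfolding recursive_fun_def by blast
  have "cf 1 (\<lambda>xs. h (xs!0))" unfolding cf_def
    using f by (intro exI[of _ f]) (auto simp: length_Suc_conv)
  then show ?thesis using cf_comp1 \<open>cf n a\<close> by blast
qed

definition hdc :: "nat \<Rightarrow> nat" where "hdc c = pfst (c - 1)"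
definition tlc :: "nat \<Rightarrow> nat" where "tlc c = psnd (c - 1)"
definition tlk :: "nat \<Rightarrow> nat \<Rightarrow> nat" where "tlk k c = primr c (\<lambda>i r. tlc r) k"
definition lenc :: "nat \<Rightarrow> nat" where "lenc c = bsum c (\<lambda>k. if tlk k c = 0 then 0 else 1)"
definition strnum :: "nat \<Rightarrow> nat" where "strnum c = primr 0 (\<lambda>k r. 2 * r + hdc (tlk k c)) (lenc c)"
definition encb :: "nat \<Rightarrow> nat \<Rightarrow> nat" where "encb n L = primr 0 (\<lambda>r c. Suc (pe (n div 2^r mod 2) c)) L"

lemma cf_hdc: "cf n a \<Longrightarrow> cf n (\<lambda>xs. hdc (a xs))" unfolding hdc_def by (rule cfI3 | assumption)+
lemma cf_tlc: "cf n a \<Longrightarrow> cf n (\<lambda>xs. tlc (a xs))" unfolding tlc_def by (rule cfI3 | assumption)+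

lemma cf_tlk: "cf n a \<Longrightarrow> cf n b \<Longrightarrow> cf n (\<lambda>xs. tlk (a xs) (b xs))"
proof -
  have "cf 2 (\<lambda>xs. tlk (xs!0) (xs!1))" unfolding tlk_def by (rule cfI3 cf_tlc | simp)+
  then show "cf n a \<Longrightarrow> cf n b \<Longrightarrow> ?thesis" by (rule cf_comp2)
qed

lemmas cfI4 = cfI3 cf_hdc cf_tlc cf_tlk

lemma cf_lenc: "cf n a \<Longrightarrow> cf n (\<lambda>xs. lenc (a xs))"
proof -
  have "cf 1 (\<lambda>xs. lenc (xs!0))" unfolding lenc_def by (rule cfI4 | simp)+
  then show "cf n a \<Longrightarrow> ?thesis" by (rule cf_comp1)
qed

lemma cf_strnum: "cf n a \<Longrightarrow> cf n (\<lambda>xs. strnum (a xs))"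
proof -
  have "cf 1 (\<lambda>xs. strnum (xs!0))" unfolding strnum_def by (rule cfI4 cf_lenc | simp)+
  then show "cf n a \<Longrightarrow> ?thesis" by (rule cf_comp1)
qed

lemma cf_encb: "cf n a \<Longrightarrow> cf n b \<Longrightarrow> cf n (\<lambda>xs. encb (a xs) (b xs))"
proof -
  have "cf 2 (\<lambda>xs. encb (xs!0) (xs!1))" unfolding encb_def by (rule cfI4 | simp)+
  then show "cf n a \<Longrightarrow> cf n b \<Longrightarrow> ?thesis" by (rule cf_comp2)
qed

definition "xd x = pfst (pfst x)"
definition "xp x = pfst (psnd (pfst x))"
definition "xsc x = psnd (psnd (pfst x))"
definition "xN x = psnd x"
definition "xm x = lenc (xsc x)"
definition "xn x = strnum (xsc x)"
definition "xk x = xp x - xm x"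
definition "xP x = xN x + xk x + 2"

lemma cf_xd: "cf n a \<Longrightarrow> cf n (\<lambda>xs. xd (a xs))" unfolding xd_def by (rule cfI4 | assumption)+
lemma cf_xp: "cf n a \<Longrightarrow> cf n (\<lambda>xs. xp (a xs))" unfolding xp_def by (rule cfI4 | assumption)+
lemma cf_xsc: "cf n a \<Longrightarrow> cf n (\<lambda>xs. xsc (a xs))" unfolding xsc_def by (rule cfI4 | assumption)+
lemma cf_xN: "cf n a \<Longrightarrow> cf n (\<lambda>xs. xN (a xs))" unfolding xN_def by (rule cfI4 | assumption)+
lemma cf_xm: "cf n a \<Longrightarrow> cf n (\<lambda>xs. xm (a xs))" unfolding xm_def by (rule cfI4 cf_lenc cf_xsc | assumption)+
lemma cf_xn: "cf n a \<Longrightarrow> cf n (\<lambda>xs. xn (a xs))" unfolding xn_def by (rule cfI4 cf_strnum cf_xsc | assumption)+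
lemma cf_xk: "cf n a \<Longrightarrow> cf n (\<lambda>xs. xk (a xs))" unfolding xk_def by (rule cfI4 cf_xp cf_xm | assumption)+
lemma cf_xP: "cf n a \<Longrightarrow> cf n (\<lambda>xs. xP (a xs))" unfolding xP_def by (rule cfI4 cf_xN cf_xk | assumption)+

lemmas cfI5 = cfI4 cf_lenc cf_strnum cf_encb cf_xd cf_xp cf_xsc cf_xN cf_xm cf_xn cf_xk cf_xP

definition Ef :: "(nat \<Rightarrow> nat) \<Rightarrow> nat \<Rightarrow> nat \<Rightarrow> nat \<Rightarrow> nat" where
  "Ef gC x n L = (if bsum (Suc (min L (xp x))) (\<lambda>l. if gC (pe (xd x) (pe (xp x) (encb (n div 2^(L-l)) l))) = 0 then 1 else 0) = 0 then 0 else 1)"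
definition apxz :: "nat \<Rightarrow> nat \<Rightarrow> nat" where
  "apxz z P = min (2^P) (if pfst z mod 2 = 0 then (pfst z div 2 * 2^P) div Suc (psnd z) else 0)"
definition Fw :: "(nat \<Rightarrow> nat) \<Rightarrow> (nat \<Rightarrow> nat) \<Rightarrow> nat \<Rightarrow> nat \<Rightarrow> nat \<Rightarrow> nat \<Rightarrow> nat \<Rightarrow> nat" where
  "Fw qL qU x n L w0 w1 = (if w0 \<le> w1 then w0 + (apxz (qU (pe (encb n L) (xP x))) (xP x) * (w1 - w0)) div 2^(xP x)
       else w0 - (apxz (qL (pe (encb n L) (xP x))) (xP x) * (w0 - w1)) div 2^(xP x))"
definition dig :: "nat \<Rightarrow> nat \<Rightarrow> nat \<Rightarrow> nat" where
  "dig x T i = T div (2^(xP x)+1)^i mod (2^(xP x)+1)"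
definition T0 :: "(nat \<Rightarrow> nat) \<Rightarrow> nat \<Rightarrow> nat" where
  "T0 gC x = bsum (2^(xk x)) (\<lambda>i. Ef gC x (xn x * 2^(xk x) + i) (xp x) * 2^(xP x) * (2^(xP x)+1)^i)"
definition Tstep :: "(nat \<Rightarrow> nat) \<Rightarrow> (nat \<Rightarrow> nat) \<Rightarrow> nat \<Rightarrow> nat \<Rightarrow> nat \<Rightarrow> nat" where
  "Tstep qL qU x r T = bsum (2^(xk x - Suc r)) (\<lambda>i. Fw qL qU x (xn x * 2^(xk x - Suc r) + i) (xp x - Suc r)
      (dig x T (2*i)) (dig x T (2*i+1)) * (2^(xP x)+1)^i)"
definition Tab :: "(nat \<Rightarrow> nat) \<Rightarrow> (nat \<Rightarrow> nat) \<Rightarrow> (nat \<Rightarrow> nat) \<Rightarrow> nat \<Rightarrow> nat \<Rightarrow> nat" where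
  "Tab gC qL qU x r = primr (T0 gC x) (\<lambda>r T. Tstep qL qU x r T) r"
definition Wv :: "(nat \<Rightarrow> nat) \<Rightarrow> (nat \<Rightarrow> nat) \<Rightarrow> (nat \<Rightarrow> nat) \<Rightarrow> nat \<Rightarrow> nat" where
  "Wv gC qL qU x = (if xp x \<le> xm x then Ef gC x (xn x) (xm x) * 2^(xP x) else dig x (Tab gC qL qU x (xk x)) 0)"
definition Qf :: "(nat \<Rightarrow> nat) \<Rightarrow> (nat \<Rightarrow> nat) \<Rightarrow> (nat \<Rightarrow> nat) \<Rightarrow> nat \<Rightarrow> nat" where
  "Qf gC qL qU x = pe (2 * Wv gC qL qU x) (2^(xP x) - 1)"

lemma cf_apxz: "cf n a \<Longrightarrow> cf n b \<Longrightarrow> cf n (\<lambda>xs. apxz (a xs) (b xs))"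
proof -
  have "cf 2 (\<lambda>xs. apxz (xs!0) (xs!1))" unfolding apxz_def by (rule cfI5 | simp)+
  then show "cf n a \<Longrightarrow> cf n b \<Longrightarrow> ?thesis" by (rule cf_comp2)
qed

lemma cf_dig: "cf n a \<Longrightarrow> cf n b \<Longrightarrow> cf n c \<Longrightarrow> cf n (\<lambda>xs. dig (a xs) (b xs) (c xs))"
proof -
  have "cf 3 (\<lambda>xs. dig (xs!0) (xs!1) (xs!2))" unfolding dig_def by (rule cfI5 | simp)+
  then show "cf n a \<Longrightarrow> cf n b \<Longrightarrow> cf n c \<Longrightarrow> ?thesis" by (rule cf_comp3)
qed

context
  fixes gC qL qU :: "nat \<Rightarrow> nat"
  assumes rg: "recursive_fun gC" and rL: "recursive_fun qL" and rU: "recursive_fun qU"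
begin

lemmas cfO = cf_oracle[OF rg] cf_oracle[OF rL] cf_oracle[OF rU]

lemma cf_Ef: "cf n a \<Longrightarrow> cf n b \<Longrightarrow> cf n c \<Longrightarrow> cf n (\<lambda>xs. Ef gC (a xs) (b xs) (c xs))"
proof -
  have "cf 3 (\<lambda>xs. Ef gC (xs!0) (xs!1) (xs!2))" unfolding Ef_def by (rule cfI5 cfO | simp)+
  then show "cf n a \<Longrightarrow> cf n b \<Longrightarrow> cf n c \<Longrightarrow> ?thesis" by (rule cf_comp3)
qed

lemma cf_Fw: "cf n a \<Longrightarrow> cf n b \<Longrightarrow> cf n c \<Longrightarrow> cf n d \<Longrightarrow> cf n e \<Longrightarrow> cf n (\<lambda>xs. Fw qL qU (a xs) (b xs) (c xs) (d xs) (e xs))"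
proof -
  have "cf 5 (\<lambda>xs. Fw qL qU (xs!0) (xs!1) (xs!2) (xs!3) (xs!4))" unfolding Fw_def by (rule cfI5 cfO cf_apxz | simp)+
  then show "cf n a \<Longrightarrow> cf n b \<Longrightarrow> cf n c \<Longrightarrow> cf n d \<Longrightarrow> cf n e \<Longrightarrow> ?thesis" by (rule cf_comp5)
qed

lemma cf_Qf: "cf 1 (\<lambda>xs. Qf gC qL qU (xs!0))"
  unfolding Qf_def Wv_def Tab_def T0_def Tstep_def by (rule cfI5 cf_Ef cf_Fw cf_dig | simp)+

lemma rec_Qf: "recursive_fun (Qf gC qL qU)"
proof -
  obtain f where f: "grec 1 f" "\<forall>xs. length xs = 1 \<longrightarrow> f xs = Qf gC qL qU (xs!0)"
    using cf_Qf unfolding cf_def by blast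
  then show ?thesis unfolding recursive_fun_def by (intro exI[of _ f]) auto
qed

end


lemma pfst_pe[simp]: "pfst (pe a b) = a" and psnd_pe[simp]: "psnd (pe a b) = b"
  by (simp_all add: pfst_def psnd_def pe_def)

lemma hdc_cons[simp]: "hdc (list_encode (x # xs)) = x" and tlc_cons[simp]: "tlc (list_encode (x # xs)) = list_encode xs"
  by (simp_all add: hdc_def tlc_def pfst_def psnd_def)

lemma hdc_Suc[simp]: "hdc (Suc (prod_encode (a, b))) = a" by (simp add: hdc_def pfst_def)

lemma list_encode_0: "list_encode ys = 0 \<longleftrightarrow> ys = []" by (cases ys) auto

lemma tlc_nil: "tlc 0 = 0"
  by (simp add: tlc_def psnd_def prod_decode_def prod_decode_aux.simps)

lemma tlk_drop: "tlk k (list_encode xs) = list_encode (drop k xs)"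
proof (induction k)
  case 0 then show ?case by (simp add: tlk_def)
next
  case (Suc k)
  have "tlk (Suc k) (list_encode xs) = tlc (list_encode (drop k xs))" using Suc by (simp add: tlk_def)
  also have "\<dots> = list_encode (drop (Suc k) xs)"
  proof -
    have e: "drop (Suc k) xs = tl (drop k xs)" by (simp add: drop_Suc tl_drop)
    show ?thesis unfolding e by (cases "drop k xs") (simp_all only: tlc_nil tlc_cons list.sel list_encode.simps(1))
  qed
  finally show ?case .
qed

lemma length_le_code: "length xs \<le> list_encode xs"
proof (induction xs)
  case (Cons x xs)
  then show ?case using le_prod_encode_2[of "list_encode xs" x] by simp
qed simp

lemma lenc_correct: "lenc (list_encode xs) = length xs"
proof -
  have "{k\<in>{..<list_encode xs}. tlk k (list_encode xs) \<noteq> 0} = {..<length xs}"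
    using length_le_code[of xs] by (auto simp: tlk_drop list_encode_0)
  then have "bsum (list_encode xs) (\<lambda>k. if tlk k (list_encode xs) = 0 then 0 else 1) = length xs"
    unfolding bsum_def by (simp add: sum.If_cases Int_def Collect_neg_eq[symmetric] flip: Diff_eq)
  then show ?thesis by (simp add: lenc_def)
qed

definition bnum :: "bool list \<Rightarrow> nat" where "bnum s = foldl (\<lambda>n b. 2 * n + of_bool b) 0 s"

definition bits :: "nat \<Rightarrow> nat \<Rightarrow> bool list" where
  "bits n L = map (\<lambda>r. odd (n div 2^(L - Suc r))) [0..<L]"

lemma length_bits[simp]: "length (bits n L) = L" by (simp add: bits_def)

lemma bits_Suc_cons: "bits n (Suc L) = odd (n div 2^L) # bits n L"
  unfolding bits_def by (simp add: map_upt_Suc del: upt_Suc)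

lemma bits_snoc: "bits (2 * n + of_bool b) (Suc L) = bits n L @ [b]"
proof (rule nth_equalityI)
  fix r assume "r < length (bits (2 * n + of_bool b) (Suc L))"
  then have r: "r < Suc L" by simp
  show "bits (2 * n + of_bool b) (Suc L) ! r = (bits n L @ [b]) ! r"
  proof (cases "r < L")
    case True
    then obtain j where j: "L - Suc r = j" "Suc L - Suc r = Suc j" by simp
    have h2: "(2 * n + of_bool b) div 2 = n" by (cases b) auto
    have "(2 * n + of_bool b) div 2 ^ Suc j = n div 2 ^ j"
      by (simp only: power_Suc div_mult2_eq h2)
    then show ?thesis using True j r unfolding bits_def by (simp add: nth_append)
  next
    case False then have "r = L" using r by simp
    then show ?thesis unfolding bits_def by (simp add: nth_append)
  qed
qed simp

lemma bits_bnum: "bits (bnum s) (length s) = s"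
proof (induction s rule: rev_induct)
  case Nil then show ?case by (simp add: bits_def)
next
  case (snoc b s)
  have "bnum (s @ [b]) = 2 * bnum s + of_bool b" by (simp add: bnum_def)
  then show ?case using bits_snoc[of "bnum s" b "length s"] snoc by simp
qed

lemma take_bits: "l \<le> L \<Longrightarrow> take l (bits n L) = bits (n div 2^(L - l)) l"
proof (rule nth_equalityI)
  fix r assume l: "l \<le> L" and "r < length (take l (bits n L))"
  then have r: "r < l" by simp
  have "n div 2 ^ (L - l) div 2 ^ (l - Suc r) = n div 2 ^ (L - Suc r)"
    using r l by (simp add: div_mult2_eq[symmetric] power_add[symmetric])
  then show "take l (bits n L) ! r = bits (n div 2 ^ (L - l)) l ! r"
    using r l unfolding bits_def by simp
qed simp

lemma enc_str_cons: "enc_str (b # t) = Suc (pe (of_bool b) (enc_str t))"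
  by (simp add: enc_str_def pe_def)

lemma ob: "(m::nat) mod 2 = of_bool (odd m)"
  by (cases "even m") (auto simp: even_iff_mod_2_eq_zero odd_iff_mod_2_eq_one)

lemma encb_correct: "encb n L = enc_str (bits n L)"
proof (induction L)
  case 0 then show ?case by (simp add: encb_def enc_str_def bits_def)
next
  case (Suc L)
  have "encb n (Suc L) = Suc (pe (n div 2^L mod 2) (encb n L))" by (simp add: encb_def)
  also have "\<dots> = enc_str (bits n (Suc L))"
    using Suc ob[of "n div 2^L"] by (simp add: bits_Suc_cons enc_str_cons)
  finally show ?case .
qed

lemma strnum_correct: "strnum (enc_str s) = bnum s"
proof -
  let ?c = "enc_str s"
  have len: "lenc ?c = length s" by (simp add: enc_str_def lenc_correct)
  have hd: "k < length s \<Longrightarrow> hdc (tlk k ?c) = of_bool (s ! k)" for k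
    unfolding enc_str_def tlk_drop by (simp add: Cons_nth_drop_Suc[symmetric] drop_map)
  have "k \<le> length s \<Longrightarrow> primr 0 (\<lambda>k r. 2 * r + hdc (tlk k ?c)) k = bnum (take k s)" for k
  proof (induction k)
    case 0 then show ?case by (simp add: bnum_def)
  next
    case (Suc k)
    then show ?case using hd[of k] by (simp add: take_Suc_conv_app_nth bnum_def)
  qed
  then show ?thesis unfolding strnum_def len by simp
qed


lemma div_bounds:
  fixes X Y :: nat assumes "0 < Y"
  shows "real (X div Y) * real Y \<le> real X" "real X < (real (X div Y) + 1) * real Y"
proof -
  have e: "real X = real (X div Y) * real Y + real (X mod Y)"
    by (metis div_mult_mod_eq of_nat_add of_nat_mult)
  have "X mod Y < Y" using assms by simp
  then have "real (X mod Y) < real Y" by simp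
  then show "real (X div Y) * real Y \<le> real X" "real X < (real (X div Y) + 1) * real Y"
    using e by (simp_all add: algebra_simps)
qed

lemma int_decode_even: "even u \<Longrightarrow> int_decode u = int (u div 2)"
  and int_decode_odd: "odd u \<Longrightarrow> int_decode u = - int (u div 2) - 1"
  by (simp_all add: int_decode_def sum_decode_def)

lemma rat_code_real: "real_of_rat (rat_of_code z) = real_of_int (int_decode (pfst z)) / real (Suc (psnd z))"
  unfolding rat_of_code_def pfst_def psnd_def by (simp add: of_rat_divide of_rat_add)

lemma apxz_err:
  fixes a :: real
  assumes a: "0 \<le> a" "a \<le> 1" and r: "\<bar>a - real_of_rat (rat_of_code z)\<bar> \<le> (1/2)^P"
  shows "apxz z P \<le> 2^P" "\<bar>real (apxz z P) / 2^P - a\<bar> \<le> 2 / 2^P"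
proof -
  show "apxz z P \<le> 2^P" unfolding apxz_def by simp
  let ?u = "pfst z" and ?v = "psnd z"
  define D :: real where "D = 2^P"
  have D: "D > 0" "(1/2)^P = 1/D" unfolding D_def by (simp_all add: power_one_over)
  let ?r = "real_of_rat (rat_of_code z)"
  have r': "\<bar>a - ?r\<bar> \<le> 1/D" using r D by simp
  show "\<bar>real (apxz z P) / 2^P - a\<bar> \<le> 2 / 2^P"
  proof (cases "even ?u")
    case True
    then have rr: "?r = real (?u div 2) / real (Suc ?v)" by (simp add: rat_code_real int_decode_even)
    define q where "q = (?u div 2 * 2^P) div Suc ?v"
    have db: "real q * real (Suc ?v) \<le> real (?u div 2 * 2^P)" "real (?u div 2 * 2^P) < (real q + 1) * real (Suc ?v)"
      unfolding q_def using div_bounds[of "Suc ?v" "?u div 2 * 2^P"] by simp_all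
    have rD: "?r * D = real (?u div 2 * 2^P) / real (Suc ?v)" unfolding rr D_def by simp
    have q1: "real q \<le> ?r * D" unfolding rD using db(1) by (simp add: field_simps)
    have q2: "?r * D < real q + 1" unfolding rD using db(2) by (simp add: field_simps)
    have ap: "apxz z P = min (2^P) q" unfolding apxz_def q_def using True by (simp add: even_iff_mod_2_eq_zero)
    show ?thesis
    proof (cases "q \<le> 2^P")
      case True
      then have "apxz z P = q" using ap by simp
      moreover have "real q / D \<le> ?r" "?r < real q / D + 1/D"
        using q1 q2 D by (simp_all add: field_simps)
      ultimately show ?thesis using r' unfolding D_def[symmetric] by (simp add: abs_le_iff) linarith?
    next
      case False
      then have "apxz z P = 2^P" using ap by simp
      moreover have "real q > D" using False unfolding D_def by (metis of_nat_less_iff of_nat_numeral of_nat_power not_le)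
      then have "1 * D < ?r * D" using q1 by linarith
      then have "1 < ?r" using mult_less_cancel_right_pos[OF D(1), of 1 ?r] by blast
      moreover have "1/D \<le> 2/D" using D by (simp add: divide_right_mono)
      moreover have "real (apxz z P) / 2^P = 1" using \<open>apxz z P = 2^P\<close> by simp
      ultimately show ?thesis using r' a unfolding D_def[symmetric] abs_le_iff by linarith
    qed
  next
    case False
    then have "?r = (- real (?u div 2) - 1) / real (Suc ?v)" by (simp add: rat_code_real int_decode_odd)
    then have "?r < 0" by (simp add: divide_neg_pos)
    moreover have "apxz z P = 0" unfolding apxz_def using False by (simp add: even_iff_mod_2_eq_zero)
    moreover have "1/D \<le> 2/D" using D by (simp add: divide_right_mono)
    moreover have "real (apxz z P) / 2^P = 0" using \<open>apxz z P = 0\<close> by simp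
    ultimately show ?thesis using r' a unfolding D_def[symmetric] abs_le_iff by linarith
  qed
qed

lemma lin_max:
  fixes ha hb hp Ha Hb y e t :: real
  assumes "\<bar>ha - Ha\<bar> \<le> e" "\<bar>hb - Hb\<bar> \<le> e" "ha \<le> hp" "hb \<le> hp" "hp = ha \<or> hp = hb" "\<bar>y - hp\<bar> \<le> t"
  shows "\<bar>y - max Ha Hb\<bar> \<le> e + t"
  using assms by (auto simp: abs_le_iff max_def)

lemma core_err:
  fixes y x0 x1 V0 V1 c p a b e D :: real
  assumes D: "0 < D" and y: "\<bar>y - (x0 + c*(x1 - x0))\<bar> \<le> 1/D" and c: "\<bar>c - p\<bar> \<le> 2/D"
    and x: "0 \<le> x0" "x0 \<le> 1" "0 \<le> x1" "x1 \<le> 1"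
    and V: "\<bar>x0 - V0\<bar> \<le> e" "\<bar>x1 - V1\<bar> \<le> e"
    and p: "p = a \<or> p = b" and ab: "0 \<le> a" "a \<le> b" "b \<le> 1"
    and pa: "0 \<le> (x1 - x0) * (p - a)" and pb: "0 \<le> (x1 - x0) * (p - b)"
  shows "\<bar>y - max (a*V1 + (1-a)*V0) (b*V1 + (1-b)*V0)\<bar> \<le> e + 3/D"
proof -
  have "\<bar>c*(x1-x0) - p*(x1-x0)\<bar> = \<bar>c - p\<bar> * \<bar>x1 - x0\<bar>" by (simp add: abs_mult left_diff_distrib[symmetric])
  also have "\<dots> \<le> 2/D * 1" using c x D by (intro mult_mono) auto
  finally have s1: "\<bar>c*(x1-x0) - p*(x1-x0)\<bar> \<le> 2/D" by simp
  have s2: "\<bar>(x0 + q*(x1-x0)) - (q*V1 + (1-q)*V0)\<bar> \<le> e" if q: "0 \<le> q" "q \<le> 1" for q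
  proof -
    have "(x0 + q*(x1-x0)) - (q*V1 + (1-q)*V0) = (1-q)*(x0 - V0) + q*(x1 - V1)" by (simp add: algebra_simps)
    also have "\<bar>\<dots>\<bar> \<le> (1-q)*\<bar>x0 - V0\<bar> + q*\<bar>x1 - V1\<bar>"
      using q by (metis abs_mult abs_of_nonneg abs_triangle_ineq diff_ge_0_iff_ge)
    also have "\<dots> \<le> (1-q)*e + q*e" using q V by (intro add_mono mult_left_mono) auto
    finally show ?thesis by (simp add: algebra_simps)
  qed
  have ha: "\<bar>(x0 + a*(x1-x0)) - (a*V1 + (1-a)*V0)\<bar> \<le> e" using s2 ab by simp
  have hb: "\<bar>(x0 + b*(x1-x0)) - (b*V1 + (1-b)*V0)\<bar> \<le> e" using s2 ab by simp
  have ga: "x0 + a*(x1-x0) \<le> x0 + p*(x1-x0)" using pa by (simp add: algebra_simps)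
  have gb: "x0 + b*(x1-x0) \<le> x0 + p*(x1-x0)" using pb by (simp add: algebra_simps)
  have hp: "x0 + p*(x1-x0) = x0 + a*(x1-x0) \<or> x0 + p*(x1-x0) = x0 + b*(x1-x0)" using p by auto
  have yp: "\<bar>y - (x0 + p*(x1-x0))\<bar> \<le> 3/D" using y s1 unfolding abs_le_iff by linarith
  show ?thesis by (rule lin_max[OF ha hb ga gb hp yp])
qed


lemma div_close:
  fixes X q :: nat and D :: real
  assumes D: "D = real (2^P)" and q: "q = X div 2^P"
  shows "\<bar>real q / D - real X / D / D\<bar> \<le> 1/D"
proof -
  have Dp: "D > 0" using D by simp
  have b: "real q * D \<le> real X" "real X < (real q + 1) * D"
    using div_bounds[of "2^P" X] D q by simp_all
  have h1: "real q \<le> real X / D" and h2: "real X / D < real q + 1" using b Dp by (simp_all add: field_simps)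
  have "real q / D \<le> real X / D / D" by (rule divide_right_mono[OF h1]) (use Dp in simp)
  moreover have "real X / D / D < (real q + 1) / D" by (rule divide_strict_right_mono[OF h2 Dp])
  ultimately show ?thesis using Dp by (simp add: abs_le_iff add_divide_distrib)
qed

lemma Fw_err:
  fixes w0 w1 \<alpha> \<beta> P :: nat and a b V0 V1 e :: real
  assumes ab: "0 \<le> a" "a \<le> b" "b \<le> 1" and al: "\<alpha> \<le> 2^P" "\<bar>real \<alpha> / 2^P - a\<bar> \<le> 2/2^P"
    and be: "\<beta> \<le> 2^P" "\<bar>real \<beta> / 2^P - b\<bar> \<le> 2/2^P"
    and w: "w0 \<le> 2^P" "w1 \<le> 2^P" "\<bar>real w0 / 2^P - V0\<bar> \<le> e" "\<bar>real w1 / 2^P - V1\<bar> \<le> e"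
    and F: "F = (if w0 \<le> w1 then w0 + (\<beta> * (w1 - w0)) div 2^P else w0 - (\<alpha> * (w0 - w1)) div 2^P)"
  shows "F \<le> 2^P \<and> \<bar>real F / 2^P - max (a*V1 + (1-a)*V0) (b*V1 + (1-b)*V0)\<bar> \<le> e + 3/2^P"
proof -
  define D :: real where "D = real (2^P)"
  have Dp: "D > 0" unfolding D_def by simp
  have D2: "(2::real)^P = D" unfolding D_def by simp
  define x0 where "x0 = real w0 / D"
  define x1 where "x1 = real w1 / D"
  have x: "0 \<le> x0" "x0 \<le> 1" "0 \<le> x1" "x1 \<le> 1"
    using w Dp unfolding x0_def x1_def D_def by (simp_all add: field_simps)
  have V: "\<bar>x0 - V0\<bar> \<le> e" "\<bar>x1 - V1\<bar> \<le> e" using w unfolding x0_def x1_def D2 by simp_all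
  show ?thesis
  proof (cases "w0 \<le> w1")
    case True
    define q where "q = (\<beta> * (w1 - w0)) div 2^P"
    have "\<beta> * (w1 - w0) \<le> 2^P * (w1 - w0)" using be(1) by simp
    then have "q \<le> (2^P * (w1 - w0)) div 2^P" unfolding q_def by (rule div_le_mono)
    then have qle: "q \<le> w1 - w0" by simp
    have Fq: "F = w0 + q" using True F q_def by simp
    have c1: "F \<le> 2^P" using Fq qle w(2) True by simp
    have X: "real (\<beta> * (w1 - w0)) = real \<beta> * (real w1 - real w0)" using True by (simp add: of_nat_diff)
    have dc: "\<bar>real q / D - real (\<beta> * (w1 - w0)) / D / D\<bar> \<le> 1/D" by (rule div_close[OF D_def q_def])
    have y: "\<bar>real F / D - (x0 + (real \<beta> / D) * (x1 - x0))\<bar> \<le> 1/D"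
    proof -
      have "real F / D = x0 + real q / D" unfolding Fq x0_def by (simp add: add_divide_distrib)
      moreover have "(real \<beta> / D) * (x1 - x0) = real (\<beta> * (w1 - w0)) / D / D"
        unfolding X x0_def x1_def using Dp by (simp add: field_simps)
      ultimately show ?thesis using dc by simp
    qed
    have c: "\<bar>real \<beta> / D - b\<bar> \<le> 2/D" using be(2) D2 by simp
    have x01: "0 \<le> x1 - x0" using True Dp unfolding x0_def x1_def by (simp add: divide_right_mono)
    have p1: "0 \<le> (x1 - x0) * (b - a)" using x01 ab by simp
    have p2: "0 \<le> (x1 - x0) * (b - b)" by simp
    have "\<bar>real F / D - max (a*V1 + (1-a)*V0) (b*V1 + (1-b)*V0)\<bar> \<le> e + 3/D"
      by (rule core_err[OF Dp y c x V _ ab p1 p2]) simp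
    then show ?thesis using c1 D2 by simp
  next
    case False
    define q where "q = (\<alpha> * (w0 - w1)) div 2^P"
    have "\<alpha> * (w0 - w1) \<le> 2^P * (w0 - w1)" using al(1) by simp
    then have "q \<le> (2^P * (w0 - w1)) div 2^P" unfolding q_def by (rule div_le_mono)
    then have qle: "q \<le> w0 - w1" by simp
    have Fq: "F = w0 - q" using False F q_def by simp
    have c1: "F \<le> 2^P" using Fq w(1) by simp
    have X: "real (\<alpha> * (w0 - w1)) = real \<alpha> * (real w0 - real w1)" using False by (simp add: of_nat_diff)
    have dc: "\<bar>real q / D - real (\<alpha> * (w0 - w1)) / D / D\<bar> \<le> 1/D" by (rule div_close[OF D_def q_def])
    have y: "\<bar>real F / D - (x0 + (real \<alpha> / D) * (x1 - x0))\<bar> \<le> 1/D"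
    proof -
      have "real F = real w0 - real q" unfolding Fq using qle by (simp add: of_nat_diff)
      then have "real F / D = x0 - real q / D" unfolding x0_def by (simp add: diff_divide_distrib)
      moreover have "(real \<alpha> / D) * (x1 - x0) = - (real (\<alpha> * (w0 - w1)) / D / D)"
        unfolding X x0_def x1_def using Dp by (simp add: field_simps)
      ultimately show ?thesis using dc by (simp add: abs_le_iff)
    qed
    have x10: "x1 - x0 \<le> 0" using False Dp unfolding x0_def x1_def by (simp add: divide_right_mono)
    have c: "\<bar>real \<alpha> / D - a\<bar> \<le> 2/D" using al(2) D2 by simp
    have p1: "0 \<le> (x1 - x0) * (a - a)" by simp
    have p2: "0 \<le> (x1 - x0) * (a - b)" using x10 ab by (intro mult_nonpos_nonpos) auto
    have "\<bar>real F / D - max (a*V1 + (1-a)*V0) (b*V1 + (1-b)*V0)\<bar> \<le> e + 3/D"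
      by (rule core_err[OF Dp y c x V _ ab p1 p2]) simp
    then show ?thesis using c1 D2 by simp
  qed
qed

lemma bsum_lt:
  assumes "\<forall>i<n. f i < B"
  shows "bsum n (\<lambda>i. f i * B^i) < B^n"
  using assms
proof (induction n)
  case 0 then show ?case by (simp add: bsum_def)
next
  case (Suc n)
  have "bsum (Suc n) (\<lambda>i. f i * B^i) = bsum n (\<lambda>i. f i * B^i) + f n * B^n" by (simp add: bsum_def)
  also have "\<dots> < B^n + f n * B^n" using Suc by simp
  also have "\<dots> = (f n + 1) * B^n" by simp
  also have "\<dots> \<le> B * B^n" using Suc.prems by (intro mult_right_mono) auto
  finally show ?case by simp
qed

lemma digit:
  assumes "\<forall>i<n. f i < B" "j < n"
  shows "bsum n (\<lambda>i. f i * B^i) div B^j mod B = f j"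
  using assms
proof (induction n)
  case 0 then show ?case by simp
next
  case (Suc n)
  have B: "0 < B" using Suc.prems by (metis gr_zeroI less_nat_zero_code)
  have S: "bsum (Suc n) (\<lambda>i. f i * B^i) = bsum n (\<lambda>i. f i * B^i) + f n * B^n" by (simp add: bsum_def)
  show ?case
  proof (cases "j < n")
    case True
    have e: "f n * B^n = B^j * (f n * B^(n - j))" using True
      by (simp add: power_add[symmetric])
    have "bsum (Suc n) (\<lambda>i. f i * B^i) div B^j = bsum n (\<lambda>i. f i * B^i) div B^j + f n * B^(n - j)"
      unfolding S e using B by simp
    moreover have "(f n * B^(n - j)) mod B = 0" using True by (simp add: power_eq_if)
    ultimately show ?thesis using Suc True by (simp add: mod_add_eq[symmetric])
  next
    case False
    then have j: "j = n" using Suc.prems by simp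
    have "bsum n (\<lambda>i. f i * B^i) < B^n" by (rule bsum_lt) (use Suc.prems in auto)
    then have "bsum (Suc n) (\<lambda>i. f i * B^i) div B^n = f n" unfolding S using B by simp
    then show ?thesis using j Suc.prems by simp
  qed
qed


definition ue :: "(bool list \<Rightarrow> real set) \<Rightarrow> bool list \<Rightarrow> real \<Rightarrow> real \<Rightarrow> real" where
  "ue \<phi> t v0 v1 = max (Inf (\<phi> t) * v1 + (1 - Inf (\<phi> t)) * v0) (Sup (\<phi> t) * v1 + (1 - Sup (\<phi> t)) * v0)"

lemma fs_props:
  assumes "forecasting_system \<phi>"
  shows "\<phi> t = {Inf (\<phi> t)..Sup (\<phi> t)}" "0 \<le> Inf (\<phi> t)" "Inf (\<phi> t) \<le> Sup (\<phi> t)" "Sup (\<phi> t) \<le> 1"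
proof -
  obtain a b where ab: "0 \<le> a" "a \<le> b" "b \<le> 1" "\<phi> t = {a..b}" using assms forecasting_system_def by blast
  then have "Inf (\<phi> t) = a" "Sup (\<phi> t) = b" by simp_all
  then show "\<phi> t = {Inf (\<phi> t)..Sup (\<phi> t)}" "0 \<le> Inf (\<phi> t)" "Inf (\<phi> t) \<le> Sup (\<phi> t)" "Sup (\<phi> t) \<le> 1"
    using ab by simp_all
qed

lemma upper_exp_interval:
  fixes a b :: real assumes "a \<le> b"
  shows "upper_exp {a..b} f = max (a * f True + (1 - a) * f False) (b * f True + (1 - b) * f False)"
proof -
  let ?h = "\<lambda>p. p * f True + (1 - p) * f False"
  have le: "?h p \<le> max (?h a) (?h b)" if "p \<in> {a..b}" for p
  proof (cases "f False \<le> f True")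
    case True
    have e: "?h p = f False + p * (f True - f False)" "?h b = f False + b * (f True - f False)"
      by (simp_all add: algebra_simps)
    have "p * (f True - f False) \<le> b * (f True - f False)"
      using that True by (intro mult_right_mono) auto
    then have "?h p \<le> ?h b" unfolding e by simp
    then show ?thesis by simp
  next
    case False
    have e: "?h p = f False - p * (f False - f True)" "?h a = f False - a * (f False - f True)"
      by (simp_all add: algebra_simps)
    have "a * (f False - f True) \<le> p * (f False - f True)"
      using that False by (intro mult_right_mono) auto
    then have "?h p \<le> ?h a" unfolding e by simp
    then show ?thesis by simp
  qed
  have mem: "max (?h a) (?h b) \<in> ?h ` {a..b}" using assms by (simp add: max_def)
  show ?thesis unfolding upper_exp_def
    by (rule cSup_eq_maximum[OF mem]) (use le in auto)
qed

lemma upper_exp_ue: "forecasting_system \<phi> \<Longrightarrow> upper_exp (\<phi> t) f = ue \<phi> t (f False) (f True)"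
proof -
  assume fs: "forecasting_system \<phi>"
  have "upper_exp (\<phi> t) f = upper_exp {Inf (\<phi> t)..Sup (\<phi> t)} f" using fs_props(1)[OF fs, of t] by simp
  also have "\<dots> = ue \<phi> t (f False) (f True)"
    using upper_exp_interval[OF fs_props(3)[OF fs, of t], of f] unfolding ue_def by simp
  finally show ?thesis .
qed

lemma ue_const: "ue \<phi> t c c = c"
  unfolding ue_def by (simp add: algebra_simps)

lemma ue_mono: "forecasting_system \<phi> \<Longrightarrow> v0 \<le> w0 \<Longrightarrow> v1 \<le> w1 \<Longrightarrow> ue \<phi> t v0 v1 \<le> ue \<phi> t w0 w1"
  using fs_props[of \<phi> t] unfolding ue_def
  by (intro max.mono add_mono mult_left_mono) auto

lemma ue_ge_min: "forecasting_system \<phi> \<Longrightarrow> min v0 v1 \<le> ue \<phi> t v0 v1"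
proof -
  assume fs: "forecasting_system \<phi>"
  let ?a = "Inf (\<phi> t)"
  have "min v0 v1 = ?a * min v0 v1 + (1 - ?a) * min v0 v1" by (simp add: algebra_simps)
  also have "\<dots> \<le> ?a * v1 + (1 - ?a) * v0"
    using fs_props[OF fs, of t] by (intro add_mono mult_left_mono) auto
  also have "\<dots> \<le> ue \<phi> t v0 v1" unfolding ue_def by simp
  finally show ?thesis .
qed

definition Ev :: "bool list set \<Rightarrow> nat \<Rightarrow> bool list \<Rightarrow> bool" where
  "Ev A p t \<longleftrightarrow> (\<exists>l\<le>p. take l t \<in> A)"

fun Vd :: "(bool list \<Rightarrow> real set) \<Rightarrow> bool list set \<Rightarrow> nat \<Rightarrow> nat \<Rightarrow> bool list \<Rightarrow> real" where
  "Vd \<phi> A p 0 t = (if Ev A p t then 1 else 0)"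
| "Vd \<phi> A p (Suc k) t = ue \<phi> t (Vd \<phi> A p k (t @ [False])) (Vd \<phi> A p k (t @ [True]))"

definition Ms :: "(bool list \<Rightarrow> real set) \<Rightarrow> bool list set \<Rightarrow> nat \<Rightarrow> bool list \<Rightarrow> real" where
  "Ms \<phi> A p t = Vd \<phi> A p (p - length t) t"

lemma prefix_take: "l \<le> n \<Longrightarrow> take l (prefix n \<omega>) = prefix l \<omega>"
  unfolding prefix_def by (simp add: take_map)

lemma length_prefix[simp]: "length (prefix n \<omega>) = n"
  unfolding prefix_def by simp

lemma Ev_snoc: "p \<le> length t \<Longrightarrow> Ev A p (t @ [x]) = Ev A p t"
  unfolding Ev_def by auto

lemma Ev_prefix:
  assumes "\<forall>u\<in>A. length u \<le> p" "p \<le> n"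
  shows "Ev A p (prefix n \<omega>) \<longleftrightarrow> \<omega> \<in> cyl_set A"
proof
  assume "Ev A p (prefix n \<omega>)"
  then obtain l where "l \<le> p" "take l (prefix n \<omega>) \<in> A" unfolding Ev_def by blast
  then show "\<omega> \<in> cyl_set A" unfolding cyl_set_def cyl_def
    using assms prefix_take[of l n \<omega>] by (auto intro!: bexI[of _ "prefix l \<omega>"])
next
  assume "\<omega> \<in> cyl_set A"
  then obtain u where "u \<in> A" "prefix (length u) \<omega> = u" unfolding cyl_set_def cyl_def by blast
  then show "Ev A p (prefix n \<omega>)" unfolding Ev_def
    using assms prefix_take[of "length u" n \<omega>] by (intro exI[of _ "length u"]) auto
qed

lemma Ms_super: "forecasting_system \<phi> \<Longrightarrow> supermartingale \<phi> (Ms \<phi> A p)"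
  unfolding supermartingale_def
proof
  fix s assume fs: "forecasting_system \<phi>"
  show "upper_exp (\<phi> s) (\<lambda>x. Ms \<phi> A p (s @ [x])) \<le> Ms \<phi> A p s"
  proof (cases "p \<le> length s")
    case True
    then have "\<And>x. Ms \<phi> A p (s @ [x]) = Ms \<phi> A p s" unfolding Ms_def using Ev_snoc by simp
    then show ?thesis using upper_exp_ue[OF fs] ue_const by simp
  next
    case False
    then have "p - length s = Suc (p - length (s @ [x]))" for x by simp
    then show ?thesis using upper_exp_ue[OF fs] unfolding Ms_def by simp
  qed
qed

lemma super_child:
  assumes fs: "forecasting_system \<phi>" and M: "supermartingale \<phi> M"
  shows "\<exists>x. M (t @ [x]) \<le> M t"
proof -
  have "upper_exp (\<phi> t) (\<lambda>x. M (t @ [x])) \<le> M t" using M unfolding supermartingale_def by blast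
  then have "min (M (t @ [False])) (M (t @ [True])) \<le> M t"
    using ue_ge_min[OF fs, of "M (t @ [False])" "M (t @ [True])" t] upper_exp_ue[OF fs] by simp
  then show ?thesis by (metis min_le_iff_disj)
qed

lemma escape:
  assumes fs: "forecasting_system \<phi>" and M: "supermartingale \<phi> M"
  shows "\<exists>\<omega>\<in>cyl t. liminf (\<lambda>n. ereal (M (prefix n \<omega>))) \<le> ereal (M t)"
proof -
  define nx where "nx u = u @ [SOME x. M (u @ [x]) \<le> M u]" for u
  define st where "st n = (nx ^^ n) t" for n
  have nxM: "M (nx u) \<le> M u" for u unfolding nx_def using someI_ex[OF super_child[OF fs M, of u]] .
  have st_Suc: "st (Suc n) = st n @ [SOME x. M (st n @ [x]) \<le> M (st n)]" for n
    unfolding st_def nx_def by simp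
  have len: "length (st n) = length t + n" for n by (induction n) (simp_all add: st_def nx_def)
  have ext: "m \<le> n \<Longrightarrow> \<exists>v. st n = st m @ v" for m n
  proof (induction n)
    case 0 then show ?case by simp
  next
    case (Suc n) then show ?case
      by (cases "m = Suc n") (auto simp: st_Suc le_Suc_eq)
  qed
  have nth_st: "m \<le> n \<Longrightarrow> i < length (st m) \<Longrightarrow> st n ! i = st m ! i" for m n i
    using ext[of m n] by (auto simp: nth_append)
  have Mst: "M (st n) \<le> M t" for n
  proof (induction n)
    case 0 then show ?case by (simp add: st_def)
  next
    case (Suc n) then show ?case using nxM[of "st n"] by (simp add: st_def)
  qed
  define \<omega> where "\<omega> i = st (Suc i) ! i" for i
  have pre: "prefix (length t + n) \<omega> = st n" for n
  proof (rule nth_equalityI)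
    show "length (prefix (length t + n) \<omega>) = length (st n)" by (simp add: len)
  next
    fix i assume "i < length (prefix (length t + n) \<omega>)"
    then have i: "i < length t + n" by simp
    have "\<omega> i = st (max (Suc i) n) ! i" unfolding \<omega>_def by (rule nth_st[symmetric]) (auto simp: len)
    also have "\<dots> = st n ! i" by (rule nth_st) (use i in \<open>auto simp: len\<close>)
    finally show "prefix (length t + n) \<omega> ! i = st n ! i" using i unfolding prefix_def by simp
  qed
  have "\<omega> \<in> cyl t" unfolding cyl_def using pre[of 0] by (simp add: st_def)
  moreover have "liminf (\<lambda>n. ereal (M (prefix n \<omega>))) \<le> ereal (M t)"
  proof (rule Liminf_le)
    show "\<forall>\<^sub>F n in sequentially. ereal (M (prefix n \<omega>)) \<le> ereal (M t)"
      unfolding eventually_sequentially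
    proof (intro exI allI impI)
      fix n assume "length t \<le> n"
      then have "prefix n \<omega> = st (n - length t)" using pre[of "n - length t"] by simp
      then show "ereal (M (prefix n \<omega>)) \<le> ereal (M t)" using Mst by simp
    qed
  qed simp
  ultimately show ?thesis by blast
qed

lemma Vd_le_super:
  assumes fs: "forecasting_system \<phi>" and M: "supermartingale \<phi> M"
    and G: "\<forall>\<omega>\<in>cyl s. liminf (\<lambda>n. ereal (M (prefix n \<omega>))) \<ge> ereal (indicator (cyl_set A) \<omega>)"
  shows "p - length t = k \<Longrightarrow> cyl t \<subseteq> cyl s \<Longrightarrow> Vd \<phi> A p k t \<le> M t"
proof (induction k arbitrary: t)
  case 0
  obtain \<omega> where \<omega>: "\<omega> \<in> cyl t" "liminf (\<lambda>n. ereal (M (prefix n \<omega>))) \<le> ereal (M t)"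
    using escape[OF fs M] by blast
  have "ereal (indicator (cyl_set A) \<omega>) \<le> ereal (M t)" using G \<omega> 0(2) by (meson order_trans subsetD)
  then have ind: "indicator (cyl_set A) \<omega> \<le> M t" by simp
  show ?case
  proof (cases "Ev A p t")
    case True
    then obtain l where l: "l \<le> p" "take l t \<in> A" unfolding Ev_def by blast
    have pt: "prefix (length t) \<omega> = t" using \<omega>(1) unfolding cyl_def by simp
    have "l \<le> length t" using 0(1) l(1) by simp
    then have "prefix l \<omega> = take l t" using prefix_take[of l "length t" \<omega>] pt by simp
    then have "\<omega> \<in> cyl_set A" unfolding cyl_set_def cyl_def using l(2)
      by (intro UN_I[of "take l t"]) (auto simp: \<open>l \<le> length t\<close> min_def)
    then show ?thesis using True ind by simp
  next
    case False
    have "(0::real) \<le> indicator (cyl_set A) \<omega>" by simp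
    then have "0 \<le> M t" using ind by linarith
    then show ?thesis using False by simp
  qed
next
  case (Suc k)
  have sub: "cyl (t @ [x]) \<subseteq> cyl t" for x
    unfolding cyl_def using prefix_take[of "length t" "Suc (length t)"] by (auto, metis append_eq_conv_conj)
  have IH: "Vd \<phi> A p k (t @ [x]) \<le> M (t @ [x])" for x
    using Suc.IH[of "t @ [x]"] Suc.prems sub[of x] by auto
  have "Vd \<phi> A p (Suc k) t \<le> ue \<phi> t (M (t @ [False])) (M (t @ [True]))"
    using ue_mono[OF fs IH IH] by simp
  also have "\<dots> = upper_exp (\<phi> t) (\<lambda>x. M (t @ [x]))" using upper_exp_ue[OF fs] by simp
  also have "\<dots> \<le> M t" using M unfolding supermartingale_def by blast
  finally show ?case .
qed

lemma upper_prob_eq: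
  assumes fs: "forecasting_system \<phi>" and A: "\<forall>u\<in>A. length u \<le> p"
  shows "upper_prob \<phi> (cyl_set A) s = ereal (Ms \<phi> A p s)"
  unfolding upper_prob_def
proof (rule antisym)
  have lim: "liminf (\<lambda>n. ereal (Ms \<phi> A p (prefix n \<omega>))) = ereal (indicator (cyl_set A) \<omega>)" for \<omega>
  proof (rule lim_imp_Liminf)
    show "((\<lambda>n. ereal (Ms \<phi> A p (prefix n \<omega>))) \<longlongrightarrow> ereal (indicator (cyl_set A) \<omega>)) sequentially"
    proof (rule tendsto_eventually, unfold eventually_sequentially, intro exI allI impI)
      fix n assume "p \<le> n"
      then show "ereal (Ms \<phi> A p (prefix n \<omega>)) = ereal (indicator (cyl_set A) \<omega>)"
        using Ev_prefix[OF A \<open>p \<le> n\<close>, of \<omega>] unfolding Ms_def by simp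
    qed
  qed simp
  show "Inf {ereal (M s) |M. supermartingale \<phi> M \<and>
      (\<forall>\<omega>\<in>cyl s. liminf (\<lambda>n. ereal (M (prefix n \<omega>))) \<ge> ereal (indicator (cyl_set A) \<omega>))} \<le> ereal (Ms \<phi> A p s)"
    by (rule Inf_lower) (use Ms_super[OF fs] lim in auto)
  show "ereal (Ms \<phi> A p s) \<le> Inf {ereal (M s) |M. supermartingale \<phi> M \<and>
      (\<forall>\<omega>\<in>cyl s. liminf (\<lambda>n. ereal (M (prefix n \<omega>))) \<ge> ereal (indicator (cyl_set A) \<omega>))}"
  proof (rule Inf_greatest, clarify)
    fix M assume M: "supermartingale \<phi> M"
      and G: "\<forall>\<omega>\<in>cyl s. liminf (\<lambda>n. ereal (M (prefix n \<omega>))) \<ge> ereal (indicator (cyl_set A) \<omega>)"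
    show "ereal (Ms \<phi> A p s) \<le> ereal (M s)"
      using Vd_le_super[OF fs M G refl] unfolding Ms_def by simp
  qed
qed


lemma bsum_ne0: "bsum n f \<noteq> 0 \<longleftrightarrow> (\<exists>i<n. f i \<noteq> 0)"
  unfolding bsum_def by force

lemma bsum_eq0: "bsum n f = 0 \<longleftrightarrow> (\<forall>i<n. f i = 0)"
  unfolding bsum_def by force

lemma lenc_str: "lenc (enc_str s) = length s" by (simp add: enc_str_def lenc_correct)

context
  fixes \<phi> :: "bool list \<Rightarrow> real set" and gC qL qU :: "nat \<Rightarrow> nat" and A :: "bool list set"
    and p dc N :: nat and s :: "bool list" and x :: nat
  assumes fs: "forecasting_system \<phi>"
    and gCc: "\<forall>t. gC (pe dc (pe p (enc_str t))) = 0 \<longleftrightarrow> t \<in> A"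
    and Alen: "\<forall>u\<in>A. length u \<le> p"
    and qLc: "\<forall>t M. \<bar>Inf (\<phi> t) - real_of_rat (rat_of_code (qL (pe (enc_str t) M)))\<bar> \<le> (1/2)^M"
    and qUc: "\<forall>t M. \<bar>Sup (\<phi> t) - real_of_rat (rat_of_code (qU (pe (enc_str t) M)))\<bar> \<le> (1/2)^M"
    and xdef: "x = pe (pe dc (pe p (enc_str s))) N"
begin

lemma xfacts: "xd x = dc" "xp x = p" "xsc x = enc_str s" "xN x = N" "xm x = length s" "xn x = bnum s"
  "bits (xn x) (xm x) = s"
  unfolding xdef xd_def xp_def xsc_def xN_def xm_def xn_def
  by (simp_all add: lenc_str strnum_correct bits_bnum)

lemma Ef_eq: "Ef gC x n L = (if Ev A p (bits n L) then 1 else 0)"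
proof -
  have "(\<exists>l<Suc (min L p). gC (pe dc (pe p (encb (n div 2^(L-l)) l))) = 0) \<longleftrightarrow> Ev A p (bits n L)"
  proof
    assume "\<exists>l<Suc (min L p). gC (pe dc (pe p (encb (n div 2^(L-l)) l))) = 0"
    then obtain l where l0: "l < Suc (min L p)" and l2: "gC (pe dc (pe p (encb (n div 2^(L-l)) l))) = 0" by blast
    have l: "l \<le> L" "l \<le> p" "gC (pe dc (pe p (encb (n div 2^(L-l)) l))) = 0" using l0 l2 by auto
    then have "take l (bits n L) \<in> A" using gCc by (simp add: encb_correct take_bits)
    then show "Ev A p (bits n L)" unfolding Ev_def using l(2) by auto
  next
    assume "Ev A p (bits n L)"
    then obtain l where l: "l \<le> p" "take l (bits n L) \<in> A" unfolding Ev_def by blast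
    show "\<exists>l<Suc (min L p). gC (pe dc (pe p (encb (n div 2^(L-l)) l))) = 0"
    proof (cases "l \<le> L")
      case True
      then show ?thesis using l gCc by (intro exI[of _ l]) (simp add: encb_correct take_bits)
    next
      case False
      then have "bits n L \<in> A" using l by simp
      then have "L \<le> p" using Alen by fastforce
      then show ?thesis using \<open>bits n L \<in> A\<close> gCc
        by (intro exI[of _ L]) (simp add: encb_correct take_bits[of L L, simplified])
    qed
  qed
  moreover have "bsum (Suc (min L p)) (\<lambda>l. if gC (pe dc (pe p (encb (n div 2^(L-l)) l))) = 0 then 1 else 0) = 0
      \<longleftrightarrow> \<not> (\<exists>l<Suc (min L p). gC (pe dc (pe p (encb (n div 2^(L-l)) l))) = 0)"
    unfolding bsum_eq0 by auto
  ultimately show ?thesis unfolding Ef_def xfacts by auto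
qed

lemma Ms_Suc:
  assumes "length t < p"
  shows "Ms \<phi> A p t = ue \<phi> t (Ms \<phi> A p (t @ [False])) (Ms \<phi> A p (t @ [True]))"
proof -
  have "p - length t = Suc (p - length (t @ [b]))" for b using assms by simp
  then show ?thesis unfolding Ms_def by simp
qed

lemma apx_L: "apxz (qL (pe (encb n L) P)) P \<le> 2^P \<and> \<bar>real (apxz (qL (pe (encb n L) P)) P) / 2^P - Inf (\<phi> (bits n L))\<bar> \<le> 2/2^P"
  using apxz_err[of "Inf (\<phi> (bits n L))" "qL (pe (encb n L) P)" P] fs_props[OF fs, of "bits n L"] qLc
  by (simp add: encb_correct)

lemma apx_U: "apxz (qU (pe (encb n L) P)) P \<le> 2^P \<and> \<bar>real (apxz (qU (pe (encb n L) P)) P) / 2^P - Sup (\<phi> (bits n L))\<bar> \<le> 2/2^P"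
  using apxz_err[of "Sup (\<phi> (bits n L))" "qU (pe (encb n L) P)" P] fs_props[OF fs, of "bits n L"] qUc
  by (simp add: encb_correct)

lemma tab_inv:
  assumes ms: "length s < p" and r: "r \<le> xk x"
  shows "\<forall>i<2^(xk x - r). dig x (Tab gC qL qU x r) i \<le> 2^(xP x) \<and>
     \<bar>real (dig x (Tab gC qL qU x r) i) / 2^(xP x) - Ms \<phi> A p (bits (xn x * 2^(xk x - r) + i) (p - r))\<bar> \<le> 3 * r / 2^(xP x)"
  using r
proof (induction r)
  case 0
  let ?B = "2^(xP x) + 1 :: nat"
  let ?f = "\<lambda>i. Ef gC x (xn x * 2^(xk x) + i) (xp x) * 2^(xP x)"
  have fb: "\<forall>i<2^(xk x). ?f i < ?B" unfolding Ef_eq by simp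
  have T: "Tab gC qL qU x 0 = bsum (2^(xk x)) (\<lambda>i. ?f i * ?B^i)"
    unfolding Tab_def T0_def by simp
  show ?case
  proof (intro allI impI)
    fix i :: nat assume i: "i < 2^(xk x - 0)"
    have d: "dig x (Tab gC qL qU x 0) i = ?f i" unfolding T dig_def using digit[OF fb] i by simp
    have "Ms \<phi> A p (bits (xn x * 2^(xk x) + i) p) = (if Ev A p (bits (xn x * 2^(xk x) + i) p) then 1 else 0)"
      unfolding Ms_def by simp
    then show "dig x (Tab gC qL qU x 0) i \<le> 2^(xP x) \<and>
     \<bar>real (dig x (Tab gC qL qU x 0) i) / 2^(xP x) - Ms \<phi> A p (bits (xn x * 2^(xk x - 0) + i) (p - 0))\<bar> \<le> 3 * real 0 / 2^(xP x)"
      unfolding d Ef_eq xfacts by simp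
  qed
next
  case (Suc r)
  let ?P = "xP x" and ?k = "xk x"
  let ?B = "2^?P + 1 :: nat"
  have rk: "r < ?k" using Suc.prems by simp
  have IH: "\<forall>i<2^(?k - r). dig x (Tab gC qL qU x r) i \<le> 2^?P \<and>
     \<bar>real (dig x (Tab gC qL qU x r) i) / 2^?P - Ms \<phi> A p (bits (xn x * 2^(?k - r) + i) (p - r))\<bar> \<le> 3 * r / 2^?P"
    using Suc by simp
  have kp: "?k \<le> p" unfolding xk_def xfacts by simp
  have e2: "(2::nat)^(?k - r) = 2 * 2^(?k - Suc r)" using rk by (metis Suc_diff_Suc power_Suc)
  define nn where "nn i = xn x * 2^(?k - Suc r) + i" for i
  define t where "t i = bits (nn i) (p - Suc r)" for i
  define f where "f i = Fw qL qU x (nn i) (p - Suc r) (dig x (Tab gC qL qU x r) (2*i)) (dig x (Tab gC qL qU x r) (2*i+1))" for i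
  have child: "t i @ [b] = bits (xn x * 2^(?k - r) + (2*i + of_bool b)) (p - r)" for i b
  proof -
    have "t i @ [b] = bits (2 * nn i + of_bool b) (Suc (p - Suc r))" unfolding t_def by (rule bits_snoc[symmetric])
    moreover have "Suc (p - Suc r) = p - r" using rk kp by simp
    moreover have "2 * nn i + of_bool b = xn x * 2^(?k - r) + (2*i + of_bool b)" unfolding nn_def e2 by simp
    ultimately show ?thesis by simp
  qed
  have lt: "length (t i) < p" for i unfolding t_def using rk kp by simp
  have fi: "f i \<le> 2^?P \<and> \<bar>real (f i) / 2^?P - Ms \<phi> A p (t i)\<bar> \<le> 3 * r / 2^?P + 3 / 2^?P"
    if i: "i < 2^(?k - Suc r)" for i
  proof -
    have i0: "2*i + of_bool False < 2^(?k - r)" and i1: "2*i + of_bool True < 2^(?k - r)" using i e2 by simp_all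
    have w0: "dig x (Tab gC qL qU x r) (2*i) \<le> 2^?P"
      "\<bar>real (dig x (Tab gC qL qU x r) (2*i)) / 2^?P - Ms \<phi> A p (t i @ [False])\<bar> \<le> 3 * r / 2^?P"
      using IH i0 unfolding child by auto
    have w1: "dig x (Tab gC qL qU x r) (2*i+1) \<le> 2^?P"
      "\<bar>real (dig x (Tab gC qL qU x r) (2*i+1)) / 2^?P - Ms \<phi> A p (t i @ [True])\<bar> \<le> 3 * r / 2^?P"
      using IH i1 unfolding child by auto
    have ms: "Ms \<phi> A p (t i) = max (Inf (\<phi> (t i)) * Ms \<phi> A p (t i @ [True]) + (1 - Inf (\<phi> (t i))) * Ms \<phi> A p (t i @ [False]))
         (Sup (\<phi> (t i)) * Ms \<phi> A p (t i @ [True]) + (1 - Sup (\<phi> (t i))) * Ms \<phi> A p (t i @ [False]))"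
      using Ms_Suc[OF lt[of i]] unfolding ue_def by simp
    have aL: "apxz (qL (pe (encb (nn i) (p - Suc r)) ?P)) ?P \<le> 2^?P"
       "\<bar>real (apxz (qL (pe (encb (nn i) (p - Suc r)) ?P)) ?P) / 2^?P - Inf (\<phi> (t i))\<bar> \<le> 2/2^?P"
      using apx_L[of "nn i" "p - Suc r" ?P] unfolding t_def by auto
    have aU: "apxz (qU (pe (encb (nn i) (p - Suc r)) ?P)) ?P \<le> 2^?P"
       "\<bar>real (apxz (qU (pe (encb (nn i) (p - Suc r)) ?P)) ?P) / 2^?P - Sup (\<phi> (t i))\<bar> \<le> 2/2^?P"
      using apx_U[of "nn i" "p - Suc r" ?P] unfolding t_def by auto
    have fdef: "f i = (if dig x (Tab gC qL qU x r) (2*i) \<le> dig x (Tab gC qL qU x r) (2*i+1)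
        then dig x (Tab gC qL qU x r) (2*i) + (apxz (qU (pe (encb (nn i) (p - Suc r)) ?P)) ?P * (dig x (Tab gC qL qU x r) (2*i+1) - dig x (Tab gC qL qU x r) (2*i))) div 2^?P
        else dig x (Tab gC qL qU x r) (2*i) - (apxz (qL (pe (encb (nn i) (p - Suc r)) ?P)) ?P * (dig x (Tab gC qL qU x r) (2*i) - dig x (Tab gC qL qU x r) (2*i+1))) div 2^?P)"
      unfolding f_def Fw_def by simp
    have fsp: "0 \<le> Inf (\<phi> (t i))" "Inf (\<phi> (t i)) \<le> Sup (\<phi> (t i))" "Sup (\<phi> (t i)) \<le> 1"
      using fs_props[OF fs, of "t i"] by auto
    show ?thesis unfolding ms
      by (rule Fw_err[OF fsp aL aU w0(1) w1(1) w0(2) w1(2) fdef])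
  qed
  have fb: "\<forall>i<2^(?k - Suc r). f i < ?B" using fi by (simp add: le_imp_less_Suc)
  have T: "Tab gC qL qU x (Suc r) = bsum (2^(?k - Suc r)) (\<lambda>i. f i * ?B^i)"
  proof -
    have "Tab gC qL qU x (Suc r) = Tstep qL qU x r (Tab gC qL qU x r)" by (simp add: Tab_def)
    then show ?thesis by (simp add: Tstep_def f_def nn_def xfacts(2))
  qed
  show ?case
  proof (intro allI impI)
    fix i :: nat assume i: "i < 2^(?k - Suc r)"
    have d: "dig x (Tab gC qL qU x (Suc r)) i = f i" unfolding T dig_def using digit[OF fb] i by simp
    have "3 * real r / 2^?P + 3 / 2^?P = 3 * real (Suc r) / 2^?P" by (simp add: field_simps)
    then show "dig x (Tab gC qL qU x (Suc r)) i \<le> 2^?P \<and>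
     \<bar>real (dig x (Tab gC qL qU x (Suc r)) i) / 2^?P - Ms \<phi> A p (bits (xn x * 2^(?k - Suc r) + i) (p - Suc r))\<bar>
       \<le> 3 * real (Suc r) / 2^?P"
      using fi[OF i] unfolding d t_def nn_def by simp
  qed
qed

lemma three_k: "3 * real k / 2^(N + k + 2) \<le> (1/2)^N"
proof -
  have "k < 2^k" by (rule less_exp)
  then have "real k < 2^k" by (metis of_nat_less_iff of_nat_numeral of_nat_power)
  moreover have "(0::real) \<le> 2^k" by simp
  ultimately have "3 * real k \<le> 4 * 2^k" by linarith
  then have "3 * real k / 2^(N + k + 2) \<le> 4 * 2^k / 2^(N + k + 2)" by (rule divide_right_mono) simp
  also have "\<dots> = (1/2)^N" by (simp add: power_add power_one_over field_simps)
  finally show ?thesis .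
qed

lemma main_err: "\<bar>real (Wv gC qL qU x) / 2^(xP x) - Ms \<phi> A p s\<bar> \<le> (1/2)^N"
proof (cases "p \<le> length s")
  case True
  then have "Wv gC qL qU x = Ef gC x (xn x) (xm x) * 2^(xP x)" unfolding Wv_def xfacts by simp
  moreover have "Ms \<phi> A p s = (if Ev A p s then 1 else 0)" unfolding Ms_def using True by simp
  ultimately show ?thesis unfolding Ef_eq xfacts by (simp add: bits_bnum)
next
  case False
  then have W: "Wv gC qL qU x = dig x (Tab gC qL qU x (xk x)) 0" unfolding Wv_def xfacts by simp
  have ms: "length s < p" using False by simp
  have "p - xk x = length s" unfolding xk_def xfacts using ms by simp
  then have "\<bar>real (Wv gC qL qU x) / 2^(xP x) - Ms \<phi> A p s\<bar> \<le> 3 * real (xk x) / 2^(xP x)"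
    using tab_inv[OF ms order_refl] xfacts(7) unfolding W xfacts(5) by simp
  also have "\<dots> \<le> (1/2)^N" unfolding xP_def xfacts by (rule three_k)
  finally show ?thesis .
qed

lemma Qf_val: "real_of_rat (rat_of_code (Qf gC qL qU x)) = real (Wv gC qL qU x) / 2^(xP x)"
proof -
  have "int_decode (2 * Wv gC qL qU x) = int (Wv gC qL qU x)" by (simp add: int_decode_even)
  then show ?thesis unfolding Qf_def rat_of_code_def pe_def
    by (simp add: of_rat_divide of_rat_add of_rat_power)
qed

end


theorem lemma5p1:
  fixes \<phi> :: "bool list \<Rightarrow> real set"
    and encD :: "'d \<Rightarrow> nat"
    and C :: "('d \<times> nat \<times> bool list) set"
  assumes "forecasting_system \<phi>"
    and "computable_forecast \<phi>"
    and "inj encD"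
    and "recursive_set (enc_DNS encD) C"
    and "\<forall>(d, p, s)\<in>C. length s \<le> p"
  shows "computable_real (enc_DNS encD)
           (\<lambda>(d, p, s). real_of_ereal (upper_prob \<phi> (cyl_set {t. (d, p, t) \<in> C}) s))"
proof -
  note fs = assms(1)
  obtain g where g: "recursive_fun g" "\<forall>e. e \<in> C \<longleftrightarrow> g (enc_DNS encD e) = 0"
    using assms(4) unfolding recursive_set_def by blast
  obtain qL where qL: "recursive_fun qL"
    "\<forall>t M. \<bar>Inf (\<phi> t) - real_of_rat (rat_of_code (qL (prod_encode (enc_str t, M))))\<bar> \<le> (1/2)^M"
    using assms(2) unfolding computable_forecast_def computable_real_def by blast
  obtain qU where qU: "recursive_fun qU"
    "\<forall>t M. \<bar>Sup (\<phi> t) - real_of_rat (rat_of_code (qU (prod_encode (enc_str t, M))))\<bar> \<le> (1/2)^M"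
    using assms(2) unfolding computable_forecast_def computable_real_def by blast
  have qLc: "\<forall>t M. \<bar>Inf (\<phi> t) - real_of_rat (rat_of_code (qL (pe (enc_str t) M)))\<bar> \<le> (1/2)^M"
    using qL(2) by (simp add: pe_def)
  have qUc: "\<forall>t M. \<bar>Sup (\<phi> t) - real_of_rat (rat_of_code (qU (pe (enc_str t) M)))\<bar> \<le> (1/2)^M"
    using qU(2) by (simp add: pe_def)
  show ?thesis unfolding computable_real_def
  proof (intro exI conjI allI)
    show "recursive_fun (Qf g qL qU)" by (rule rec_Qf[OF g(1) qL(1) qU(1)])
  next
    fix e :: "'d \<times> nat \<times> bool list" and N :: nat
    obtain d p s where e: "e = (d, p, s)" by (cases e) auto
    let ?A = "{t. (d, p, t) \<in> C}"
    have Alen: "\<forall>u\<in>?A. length u \<le> p" using assms(5) by auto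
    have gCc: "\<forall>t. g (pe (encD d) (pe p (enc_str t))) = 0 \<longleftrightarrow> t \<in> ?A"
      using g(2) by (simp add: enc_DNS_def pe_def)
    define x where "x = pe (pe (encD d) (pe p (enc_str s))) N"
    have xe: "prod_encode (enc_DNS encD e, N) = x" unfolding x_def e enc_DNS_def pe_def by simp
    have up: "real_of_ereal (upper_prob \<phi> (cyl_set ?A) s) = Ms \<phi> ?A p s"
      using upper_prob_eq[OF fs Alen] by simp
    show "\<bar>(case e of (d, p, s) \<Rightarrow> real_of_ereal (upper_prob \<phi> (cyl_set {t. (d, p, t) \<in> C}) s)) -
          real_of_rat (rat_of_code (Qf g qL qU (prod_encode (enc_DNS encD e, N))))\<bar> \<le> (1/2)^N"
      unfolding xe using main_err[OF fs gCc Alen qLc qUc x_def] Qf_val[OF fs gCc Alen qLc qUc x_def] up e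
      by (simp add: abs_minus_commute)
  qed
qed


end
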